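(* Let $n=2m$ and let $\Delta'$ be the simplicial complex on vertex set $\{(i,j):1\le i\le j\le n,\ i+j\ne n+1\}$ whose faces are the sets $F$ with $\prod_{(i,j)\in F}x_{ij}\notin K(2,n)$, with $K(2,n)$ as in the context. Order the facets of $\Delta'$ as follows: if $F$ is a facet of $\Delta_A$ and $G$ a facet of $\Delta_B$, then $F<G$ iff $A<B$ lexicographically, or $A=B$ and $F<G$ in the standard order of paths in $T_A$. Then this total order is a two-way shelling of $\Delta'$; precisely, for every facet $F$ of $\Delta'$, $$\langle F\rangle\cap\langle G:G<F\rangle=\langle F\setminus\{x\}:x\in F^-\rangle\quad\text{and}\quad\langle F\rangle\cap\langle G:G>F\rangle=\langle F\setminus\{x\}:x\in F^+\rangle.$$
   Context: $K(2,n)\subset K[x_{ij}:1\le i\le j\le n]$ is generated by the products $x_{ij}x_{hk}$ ($i\le j$, $h\le k$) not involving any $x_{a,n+1-a}$ and such that either $a+b=n+1$ for some $a\in\{i,j\}$, $b\in\{h,k\}$, or $i<h$ and $j<k$. $\langle F_1,\dots,F_k\rangle$ is the smallest simplicial complex containing $F_1,\dots,F_k$. $\mathcal A$ is the family of $m$-subsets $A\subseteq[n]$ with $i+j\ne n+1$ for all $i,j\in A$; for $A=\{a_1<\dots<a_m\}$, $T_A=\{(i,j):i\le j,\ i,j\in A\}$ and $\Delta_A=\{F\in\Delta':F\subseteq T_A\}$. It is a fact (established in the paper) that the facets of $\Delta_A$ are exactly the paths in $T_A$ starting at $(a_1,a_m)$ and ending at a diagonal position $(a_i,a_i)$, with steps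 horizontally left or vertically down, and each facet of $\Delta'$ is a facet of exactly one $\Delta_A$. Lexicographic order: $\{a_1<\dots<a_m\}<\{b_1<\dots<b_m\}$ iff $a_j<b_j$ for the smallest $j$ with $a_j\ne b_j$. Standard order of paths in $T_A$: $F<G$ iff at the first step (starting from $(a_1,a_m)$) where they differ, $F$'s step is horizontal and $G$'s is vertical. Types: an interior point of a path is a left turn if the step into it is horizontal and the step out vertical, a right turn if the step in is vertical and the step out horizontal; the last point (if the path has at least two points) is a left turn if the last step is horizontal, a right turn if vertical; all other points are isolated, each being the only point of the path with a certain $c\in A$ as row or column index ($c$ is its index). $F^-$ = right turns of $F$ together with isolated points of index $>m$; $F^+=F\setminus F^-$ = left turns together with isolated points of index $\le m$. *)

theory Defs
  imports Main
begin

type_synonym pos = "nat \<times> nat"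

definition V :: "nat \<Rightarrow> pos set" where
  "V n = {(i, j). 1 \<le> i \<and> i \<le> j \<and> j \<le> n \<and> i + j \<noteq> n + 1}"

text \<open>gen n p q: the product x_p x_q is one of the listed generators of K(2,n).\<close>
definition gen :: "nat \<Rightarrow> pos \<Rightarrow> pos \<Rightarrow> bool" where
  "gen n p q = (case p of (i, j) \<Rightarrow> case q of (h, k) \<Rightarrow>
     i \<le> j \<and> h \<le> k \<and>
     i + j \<noteq> n + 1 \<and> h + k \<noteq> n + 1 \<and>
     ((\<exists>a\<in>{i, j}. \<exists>b\<in>{h, k}. a + b = n + 1) \<or> (i < h \<and> j < k)))"

text \<open>F is a face iff the squarefree monomial prod x_p (p in F) is not in K(2,n),
  i.e. no generator x_p x_q (p, q distinct elements of F) divides it.\<close>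
definition Delta' :: "nat \<Rightarrow> pos set set" where
  "Delta' n = {F. F \<subseteq> V n \<and> (\<forall>p\<in>F. \<forall>q\<in>F. p \<noteq> q \<longrightarrow> \<not> gen n p q)}"

definition facets :: "'a set set \<Rightarrow> 'a set set" where
  "facets S = {F \<in> S. \<forall>G\<in>S. F \<subseteq> G \<longrightarrow> G = F}"

definition cplx :: "'a set set \<Rightarrow> 'a set set" where
  "cplx S = {H. \<exists>F\<in>S. H \<subseteq> F}"

definition AA :: "nat \<Rightarrow> nat set set" where
  "AA n = {A. A \<subseteq> {1..n} \<and> card A = n div 2 \<and> (\<forall>i\<in>A. \<forall>j\<in>A. i + j \<noteq> n + 1)}"

definition T :: "nat set \<Rightarrow> pos set" where
  "T A = {(i, j). i \<in> A \<and> j \<in> A \<and> i \<le> j}"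

definition DeltaA :: "nat \<Rightarrow> nat set \<Rightarrow> pos set set" where
  "DeltaA n A = {F \<in> Delta' n. F \<subseteq> T A}"

text \<open>One step: horizontally left (column to the previous element of A) or
  vertically down (row to the next element of A).\<close>
definition hstep :: "nat set \<Rightarrow> pos \<Rightarrow> pos \<Rightarrow> bool" where
  "hstep A p q = (fst q = fst p \<and> snd q \<in> A \<and> snd q < snd p \<and>
                  (\<forall>c\<in>A. \<not> (snd q < c \<and> c < snd p)))"

definition vstep :: "nat set \<Rightarrow> pos \<Rightarrow> pos \<Rightarrow> bool" where
  "vstep A p q = (snd q = snd p \<and> fst q \<in> A \<and> fst p < fst q \<and>
                  (\<forall>c\<in>A. \<not> (fst p < c \<and> c < fst q)))"

definition is_path :: "nat set \<Rightarrow> pos list \<Rightarrow> bool" where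
  "is_path A ps = (ps \<noteq> [] \<and> hd ps = (Min A, Max A) \<and> fst (last ps) = snd (last ps) \<and>
     set ps \<subseteq> T A \<and>
     (\<forall>k. Suc k < length ps \<longrightarrow> hstep A (ps ! k) (ps ! Suc k) \<or> vstep A (ps ! k) (ps ! Suc k)))"

text \<open>Standard order: at the first step where the paths differ, the step of ps is
  horizontal (and that of qs vertical).\<close>
definition path_less :: "pos list \<Rightarrow> pos list \<Rightarrow> bool" where
  "path_less ps qs = (\<exists>k. 0 < k \<and> k < length ps \<and> k < length qs \<and> take k ps = take k qs \<and>
      ps ! k \<noteq> qs ! k \<and> fst (ps ! k) = fst (ps ! (k - 1)) \<and> snd (qs ! k) = snd (qs ! (k - 1)))"

definition lex_less :: "nat set \<Rightarrow> nat set \<Rightarrow> bool" where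
  "lex_less A B = (let as = sorted_list_of_set A; bs = sorted_list_of_set B in
     \<exists>j. j < length as \<and> j < length bs \<and> take j as = take j bs \<and> as ! j < bs ! j)"

definition facet_less :: "nat \<Rightarrow> pos set \<Rightarrow> pos set \<Rightarrow> bool" where
  "facet_less n F G = (\<exists>A B. A \<in> AA n \<and> B \<in> AA n \<and> F \<in> facets (DeltaA n A) \<and>
      G \<in> facets (DeltaA n B) \<and>
      (lex_less A B \<or> (A = B \<and> (\<exists>ps qs. is_path A ps \<and> is_path A qs \<and> set ps = F \<and>
          set qs = G \<and> path_less ps qs))))"

definition horiz :: "pos \<Rightarrow> pos \<Rightarrow> bool" where "horiz p q = (fst p = fst q)"
definition vert :: "pos \<Rightarrow> pos \<Rightarrow> bool" where "vert p q = (snd p = snd q)"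

definition left_turn :: "pos list \<Rightarrow> nat \<Rightarrow> bool" where
  "left_turn ps k =
     ((0 < k \<and> Suc k < length ps \<and> horiz (ps ! (k - 1)) (ps ! k) \<and> vert (ps ! k) (ps ! Suc k)) \<or>
      (2 \<le> length ps \<and> k = length ps - 1 \<and> horiz (ps ! (k - 1)) (ps ! k)))"

definition right_turn :: "pos list \<Rightarrow> nat \<Rightarrow> bool" where
  "right_turn ps k =
     ((0 < k \<and> Suc k < length ps \<and> vert (ps ! (k - 1)) (ps ! k) \<and> horiz (ps ! k) (ps ! Suc k)) \<or>
      (2 \<le> length ps \<and> k = length ps - 1 \<and> vert (ps ! (k - 1)) (ps ! k)))"

definition isolated :: "pos list \<Rightarrow> nat \<Rightarrow> bool" where
  "isolated ps k = (k < length ps \<and> \<not> left_turn ps k \<and> \<not> right_turn ps k)"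

definition is_index :: "pos list \<Rightarrow> nat \<Rightarrow> nat \<Rightarrow> bool" where
  "is_index ps k c = (c \<in> {fst (ps ! k), snd (ps ! k)} \<and>
      (\<forall>l < length ps. l \<noteq> k \<longrightarrow> fst (ps ! l) \<noteq> c \<and> snd (ps ! l) \<noteq> c))"

definition minus_list :: "nat \<Rightarrow> pos list \<Rightarrow> pos set" where
  "minus_list m ps = {ps ! k | k. k < length ps \<and>
      (right_turn ps k \<or> (isolated ps k \<and> (\<exists>c. is_index ps k c \<and> c > m)))}"

definition Fminus :: "nat \<Rightarrow> pos set \<Rightarrow> pos set" where
  "Fminus n F = {p. \<exists>A ps. A \<in> AA n \<and> is_path A ps \<and> set ps = F \<and> p \<in> minus_list (n div 2) ps}"

definition Fplus :: "nat \<Rightarrow> pos set \<Rightarrow> pos set" where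
  "Fplus n F = F - Fminus n F"

end

theory Submission
  imports Defs
begin

lemma is_pathD:
  assumes "is_path A ps"
  shows "ps \<noteq> []" "hd ps = (Min A, Max A)" "fst (last ps) = snd (last ps)" "set ps \<subseteq> T A"
    "\<And>k. Suc k < length ps \<Longrightarrow> hstep A (ps!k) (ps!Suc k) \<or> vstep A (ps!k) (ps!Suc k)"
  using assms unfolding is_path_def by auto

lemma path_T:
  assumes "is_path A ps" "k < length ps"
  shows "fst (ps!k) \<in> A" "snd (ps!k) \<in> A" "fst (ps!k) \<le> snd (ps!k)"
proof -
  have "ps!k \<in> T A" using is_pathD(4)[OF assms(1)] assms(2) nth_mem by blast
  then show "fst (ps!k) \<in> A" "snd (ps!k) \<in> A" "fst (ps!k) \<le> snd (ps!k)"
    unfolding T_def by auto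
qed

lemma path_0: "is_path A ps \<Longrightarrow> ps!0 = (Min A, Max A)"
  using is_pathD(1,2) by (metis hd_conv_nth)

lemma path_last: "is_path A ps \<Longrightarrow> fst (ps!(length ps - 1)) = snd (ps!(length ps - 1))"
  using is_pathD(1,3) by (metis last_conv_nth)

lemma step_cases:
  assumes "is_path A ps" "Suc k < length ps"
  obtains (H) "fst (ps!Suc k) = fst (ps!k)" "snd (ps!Suc k) < snd (ps!k)"
      "\<forall>c\<in>A. \<not> (snd (ps!Suc k) < c \<and> c < snd (ps!k))"
    | (V) "snd (ps!Suc k) = snd (ps!k)" "fst (ps!k) < fst (ps!Suc k)"
      "\<forall>c\<in>A. \<not> (fst (ps!k) < c \<and> c < fst (ps!Suc k))"
  using is_pathD(5)[OF assms] unfolding hstep_def vstep_def by blast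

lemma path_mono:
  assumes "is_path A ps" "i \<le> j" "j < length ps"
  shows "fst (ps!i) \<le> fst (ps!j) \<and> snd (ps!j) \<le> snd (ps!i)"
  using assms(2,3)
proof (induction j)
  case 0 then show ?case by simp
next
  case (Suc j)
  show ?case
  proof (cases "i = Suc j")
    case True then show ?thesis by simp
  next
    case False
    then have "i \<le> j" using Suc by simp
    with Suc have ih: "fst (ps!i) \<le> fst (ps!j) \<and> snd (ps!j) \<le> snd (ps!i)" by simp
    from step_cases[OF assms(1) Suc.prems(2)] show ?thesis
      by cases (use ih in auto)
  qed
qed

lemma path_strict:
  assumes "is_path A ps" "i < j" "j < length ps"
  shows "fst (ps!i) < fst (ps!j) \<or> snd (ps!j) < snd (ps!i)"
proof -
  have m1: "fst (ps!i) \<le> fst (ps!Suc i) \<and> snd (ps!Suc i) \<le> snd (ps!i)"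
    using path_mono[OF assms(1), of i "Suc i"] assms by simp
  have m2: "fst (ps!Suc i) \<le> fst (ps!j) \<and> snd (ps!j) \<le> snd (ps!Suc i)"
    using path_mono[OF assms(1), of "Suc i" j] assms by simp
  from step_cases[OF assms(1), of i] assms show ?thesis
    by cases (use m1 m2 in auto)
qed

lemma path_nth_inj:
  assumes "is_path A ps" "i < length ps" "j < length ps" "ps!i = ps!j"
  shows "i = j"
proof (rule ccontr)
  assume "i \<noteq> j"
  then consider "i < j" | "j < i" by linarith
  then show False
    by cases (use path_strict[OF assms(1)] assms in force)+
qed

lemma path_distinct: "is_path A ps \<Longrightarrow> distinct ps"
  using path_nth_inj by (metis distinct_conv_nth)

definition Rel :: "pos \<Rightarrow> pos \<Rightarrow> bool" where
  "Rel p q = (fst p \<le> fst q \<and> snd q \<le> snd p \<and> p \<noteq> q)"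

lemma path_sorted: "is_path A ps \<Longrightarrow> sorted_wrt Rel ps"
  unfolding sorted_wrt_iff_nth_less Rel_def
  using path_mono path_nth_inj by (metis less_imp_le_nat nat_neq_iff order.strict_trans)

lemma sorted_Rel_unique:
  "sorted_wrt Rel xs \<Longrightarrow> sorted_wrt Rel ys \<Longrightarrow> set xs = set ys \<Longrightarrow> xs = ys"
proof (induction xs arbitrary: ys)
  case Nil then show ?case by simp
next
  case (Cons x xs)
  then obtain y ys' where ys: "ys = y # ys'" by (cases ys) auto
  have asym: "\<And>p q. Rel p q \<Longrightarrow> \<not> Rel q p" unfolding Rel_def by (auto simp: prod_eq_iff)
  have irr: "\<And>p. \<not> Rel p p" unfolding Rel_def by auto
  have "x = y"
  proof (rule ccontr)
    assume ne: "x \<noteq> y"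
    have "x \<in> set ys'" using Cons.prems(3) ys ne by (metis insert_iff list.simps(15) list.set_intros(1))
    then have "Rel y x" using Cons.prems(2) ys by auto
    moreover have "y \<in> set xs" using Cons.prems(3) ys ne by (metis insert_iff list.simps(15) list.set_intros(1))
    then have "Rel x y" using Cons.prems(1) by auto
    ultimately show False using asym by blast
  qed
  moreover have "x \<notin> set xs"
  proof
    assume "x \<in> set xs" then have "Rel x x" using Cons.prems(1) by simp
    then show False using irr by blast
  qed
  moreover have "y \<notin> set ys'"
  proof
    assume "y \<in> set ys'" then have "Rel y y" using Cons.prems(2) ys by simp
    then show False using irr by blast
  qed
  ultimately have "set xs = set ys'" using Cons.prems(3) ys by auto
  then have "xs = ys'" using Cons ys by auto
  then show ?case using ys \<open>x = y\<close> by simp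
qed

lemma path_cover:
  assumes "finite A" "is_path A ps" "a \<in> A"
  shows "\<exists>k<length ps. fst (ps!k) = a \<or> snd (ps!k) = a"
proof -
  define K where "K = {k. k < length ps \<and> fst (ps!k) \<le> a \<and> a \<le> snd (ps!k)}"
  have "0 \<in> K" unfolding K_def using path_0[OF assms(2)] is_pathD(1)[OF assms(2)] assms
    by (auto intro: Min_le Max_ge)
  have fK: "finite K" unfolding K_def by auto
  define k where "k = Max K"
  have kK: "k \<in> K" unfolding k_def using fK \<open>0 \<in> K\<close> Max_in by blast
  have kmax: "\<And>j. j \<in> K \<Longrightarrow> j \<le> k" unfolding k_def using fK by simp
  show ?thesis
  proof (cases "fst (ps!k) = a \<or> snd (ps!k) = a")
    case True then show ?thesis using kK K_def by auto
  next
    case False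
    then have lt: "fst (ps!k) < a" "a < snd (ps!k)" using kK K_def by auto
    have "Suc k < length ps"
    proof (rule ccontr)
      assume "\<not> Suc k < length ps"
      then have "k = length ps - 1" using kK K_def by auto
      then show False using path_last[OF assms(2)] lt by simp
    qed
    from step_cases[OF assms(2) this, case_names H V] show ?thesis
    proof cases
      case H
      have "Suc k \<notin> K" using kmax by fastforce
      then have "snd (ps!Suc k) < a" using H lt \<open>Suc k < length ps\<close> K_def by auto
      then show ?thesis using H(3) lt assms(3) by blast
    next
      case V
      have "Suc k \<notin> K" using kmax by fastforce
      then have "a < fst (ps!Suc k)" using V lt \<open>Suc k < length ps\<close> K_def by auto
      then show ?thesis using V(3) lt assms(3) by blast
    qed
  qed
qed

lemma path_indices:
  assumes "finite A" "is_path A ps"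
  shows "fst ` set ps \<union> snd ` set ps = A"
proof
  show "fst ` set ps \<union> snd ` set ps \<subseteq> A" using is_pathD(4)[OF assms(2)] unfolding T_def by auto
  show "A \<subseteq> fst ` set ps \<union> snd ` set ps"
  proof
    fix a assume "a \<in> A"
    from path_cover[OF assms this] obtain k where "k < length ps" "fst (ps!k) = a \<or> snd (ps!k) = a" by blast
    then show "a \<in> fst ` set ps \<union> snd ` set ps" by (metis UnI1 UnI2 image_eqI nth_mem)
  qed
qed

lemma path_unique:
  assumes "finite A" "finite B" "is_path A ps" "is_path B qs" "set ps = set qs"
  shows "A = B \<and> ps = qs"
  using path_indices[OF assms(1,3)] path_indices[OF assms(2,4)] assms(5)
    sorted_Rel_unique[OF path_sorted[OF assms(3)] path_sorted[OF assms(4)]] by auto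

lemma path_maximal:
  assumes "finite A" "is_path A ps" "i \<in> A" "j \<in> A" "i \<le> j" "(i, j) \<notin> set ps"
  shows "\<exists>p\<in>set ps. (fst p < i \<and> snd p < j) \<or> (i < fst p \<and> j < snd p)"
proof -
  define K where "K = {k. k < length ps \<and> fst (ps!k) \<le> i \<and> j \<le> snd (ps!k)}"
  have "0 \<in> K" unfolding K_def using path_0[OF assms(2)] is_pathD(1)[OF assms(2)] assms
    by (auto intro: Min_le Max_ge)
  have fK: "finite K" unfolding K_def by auto
  define k where "k = Max K"
  have kK: "k \<in> K" unfolding k_def using fK \<open>0 \<in> K\<close> Max_in by blast
  have kmax: "\<And>j. j \<in> K \<Longrightarrow> j \<le> k" unfolding k_def using fK by simp
  have ne: "ps!k \<noteq> (i, j)" by (metis (mono_tags) kK K_def mem_Collect_eq nth_mem assms(6))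
  have "Suc k < length ps"
  proof (rule ccontr)
    assume "\<not> Suc k < length ps"
    then have "k = length ps - 1" using kK K_def by auto
    then have "fst (ps!k) = snd (ps!k)" using path_last[OF assms(2)] by simp
    then show False using kK K_def ne assms(5) by (auto simp: prod_eq_iff)
  qed
  have nK: "Suc k \<notin> K" using kmax by fastforce
  have sk: "ps!Suc k \<in> set ps" using \<open>Suc k < length ps\<close> by simp
  from step_cases[OF assms(2) \<open>Suc k < length ps\<close>, case_names H V] show ?thesis
  proof cases
    case H
    then have a: "snd (ps!Suc k) < j" using nK kK K_def \<open>Suc k < length ps\<close> by auto
    then have "snd (ps!k) = j" using H(3) assms(4) kK K_def by force
    then have "fst (ps!k) < i" using ne kK K_def by (auto simp: prod_eq_iff)
    then have "fst (ps!Suc k) < i \<and> snd (ps!Suc k) < j" using a H by simp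
    then show ?thesis using sk by blast
  next
    case V
    then have a: "i < fst (ps!Suc k)" using nK kK K_def \<open>Suc k < length ps\<close> by auto
    then have "fst (ps!k) = i" using V(3) assms(3) kK K_def by force
    then have "j < snd (ps!k)" using ne kK K_def by (auto simp: prod_eq_iff)
    then have "i < fst (ps!Suc k) \<and> j < snd (ps!Suc k)" using a V by simp
    then show ?thesis using sk by blast
  qed
qed

lemma AA_finite: "A \<in> AA n \<Longrightarrow> finite A"
  unfolding AA_def by (auto intro: finite_subset)

lemma AA_sub: "A \<in> AA n \<Longrightarrow> a \<in> A \<Longrightarrow> 1 \<le> a \<and> a \<le> n"
  unfolding AA_def by auto

lemma AA_compl: "A \<in> AA n \<Longrightarrow> a \<in> A \<Longrightarrow> b \<in> A \<Longrightarrow> a + b \<noteq> n + 1"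
  unfolding AA_def by auto

lemma AA_card: "A \<in> AA n \<Longrightarrow> card A = n div 2"
  unfolding AA_def by auto

definition phi :: "nat \<Rightarrow> nat \<Rightarrow> nat" where "phi n a = min a (n + 1 - a)"

lemma AA_pair:
  assumes "n = 2 * m" "A \<in> AA n" "1 \<le> x" "x \<le> n" "x \<notin> A"
  shows "n + 1 - x \<in> A"
proof -
  have fin: "finite A" using AA_finite assms by blast
  have inj: "inj_on (phi n) A"
  proof
    fix a b assume ab: "a \<in> A" "b \<in> A" "phi n a = phi n b"
    have "a + b \<noteq> n + 1" using AA_compl[OF assms(2) ab(1,2)] .
    moreover have "a \<le> n" "b \<le> n" using AA_sub[OF assms(2)] ab by auto
    ultimately show "a = b" using ab(3) unfolding phi_def by (auto simp: min_def split: if_splits)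
  qed
  have sub: "phi n ` A \<subseteq> {1..m}"
    using AA_sub[OF assms(2)] assms(1) unfolding phi_def by (force simp: min_def)
  have "card (phi n ` A) = m" using card_image[OF inj] AA_card[OF assms(2)] assms(1) by simp
  then have eq: "phi n ` A = {1..m}" using sub by (simp add: card_subset_eq)
  have "phi n x \<in> {1..m}" using assms unfolding phi_def by (auto simp: min_def)
  then obtain a where a: "a \<in> A" "phi n a = phi n x" using eq by (metis imageE)
  have "a \<le> n" using AA_sub[OF assms(2) a(1)] by simp
  then have "a = x \<or> a = n + 1 - x" using a(2) assms(4) unfolding phi_def by (auto simp: min_def split: if_splits)
  then show ?thesis using a(1) assms(5) by auto
qed

lemma facetsI: "F \<in> S \<Longrightarrow> (\<And>G. G \<in> S \<Longrightarrow> F \<subseteq> G \<Longrightarrow> G = F) \<Longrightarrow> F \<in> facets S"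
  unfolding facets_def by simp

lemma facetsD: "F \<in> facets S \<Longrightarrow> F \<in> S"
  "F \<in> facets S \<Longrightarrow> G \<in> S \<Longrightarrow> F \<subseteq> G \<Longrightarrow> G = F"
  unfolding facets_def by simp_all

lemma path_face:
  assumes "A \<in> AA n" "is_path A ps"
  shows "set ps \<in> Delta' n"
proof -
  have sub: "set ps \<subseteq> V n"
  proof
    fix p assume "p \<in> set ps"
    then have "p \<in> T A" using is_pathD(4)[OF assms(2)] by auto
    then show "p \<in> V n" unfolding T_def V_def using AA_sub[OF assms(1)] AA_compl[OF assms(1)] by auto
  qed
  have ng: "\<not> gen n p q" if pq: "p \<in> set ps" "q \<in> set ps" "p \<noteq> q" for p q
  proof -
    obtain a where a: "a < length ps" "p = ps!a" using pq(1) by (auto simp: in_set_conv_nth)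
    obtain b where b: "b < length ps" "q = ps!b" using pq(2) by (auto simp: in_set_conv_nth)
    have "a \<noteq> b" using a b pq by auto
    have inA: "fst p \<in> A" "snd p \<in> A" "fst q \<in> A" "snd q \<in> A" using path_T[OF assms(2)] a b by auto
    have nsum: "\<not> (\<exists>x\<in>{fst p, snd p}. \<exists>y\<in>{fst q, snd q}. x + y = n + 1)"
      using AA_compl[OF assms(1)] inA by auto
    have "\<not> (fst p < fst q \<and> snd p < snd q)"
    proof (cases "a < b")
      case True then show ?thesis using path_mono[OF assms(2), of a b] a b by auto
    next
      case False then have "b < a" using \<open>a \<noteq> b\<close> by simp
      then show ?thesis using path_mono[OF assms(2), of b a] a b by auto
    qed
    then show ?thesis using nsum unfolding gen_def by (auto split: prod.splits)
  qed
  show ?thesis unfolding Delta'_def using sub ng by auto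
qed

lemma gen_intro1:
  assumes "p \<in> V n" "q \<in> V n" "a \<in> {fst p, snd p}" "b \<in> {fst q, snd q}" "a + b = n + 1"
  shows "gen n p q"
  using assms unfolding gen_def V_def by (auto split: prod.splits)

lemma gen_intro2:
  assumes "p \<in> V n" "q \<in> V n" "fst p < fst q" "snd p < snd q"
  shows "gen n p q"
  using assms unfolding gen_def V_def by (auto split: prod.splits)

lemma path_facet:
  assumes "n = 2 * m" "A \<in> AA n" "is_path A ps"
  shows "set ps \<in> facets (Delta' n)"
proof -
  have fin: "finite A" using AA_finite assms by blast
  have face: "set ps \<in> Delta' n" using path_face[OF assms(2,3)] .
  have mx: "G = set ps" if G: "G \<in> Delta' n" "set ps \<subseteq> G" for G
  proof
    show "G \<subseteq> set ps"
    proof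
      fix y assume yG: "y \<in> G"
      have GV: "G \<subseteq> V n" and Gng: "\<And>p q. p \<in> G \<Longrightarrow> q \<in> G \<Longrightarrow> p \<noteq> q \<Longrightarrow> \<not> gen n p q"
        using G(1) unfolding Delta'_def by auto
      have yV: "y \<in> V n" using GV yG by auto
      have pV: "p \<in> V n" if "p \<in> set ps" for p using G that GV by auto
      have idx: "z \<in> A" if z: "z \<in> {fst y, snd y}" for z
      proof (rule ccontr)
        assume "z \<notin> A"
        have z1: "1 \<le> z" "z \<le> n" using yV z unfolding V_def by auto
        have "n + 1 - z \<in> A" using AA_pair[OF assms(1,2) z1 \<open>z \<notin> A\<close>] .
        then obtain k where k: "k < length ps" "fst (ps!k) = n + 1 - z \<or> snd (ps!k) = n + 1 - z"
          using path_cover[OF fin assms(3)] by blast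
        have pk: "ps!k \<in> set ps" using k by simp
        have g: "gen n y (ps!k)"
        proof (rule gen_intro1[OF yV pV[OF pk] z])
          show "n + 1 - z \<in> {fst (ps!k), snd (ps!k)}" using k(2) by auto
          show "z + (n + 1 - z) = n + 1" using z1 by simp
        qed
        have "y \<noteq> ps!k"
        proof
          assume "y = ps!k"
          then have "n + 1 - z \<in> {fst y, snd y}" using k by auto
          moreover have "n + 1 - z \<noteq> z" using z1 assms(1) by presburger
          moreover have "fst y + snd y \<noteq> n + 1" using yV unfolding V_def by (auto split: prod.splits)
          ultimately show False using z z1 by auto
        qed
        then show False using Gng[OF yG] G(2) pk g by (meson subsetD)
      qed
      show "y \<in> set ps"
      proof (rule ccontr)
        assume ny: "y \<notin> set ps"
        have "fst y \<le> snd y" using yV unfolding V_def by auto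
        then obtain p where p: "p \<in> set ps" "(fst p < fst y \<and> snd p < snd y) \<or> (fst y < fst p \<and> snd y < snd p)"
          using path_maximal[OF fin assms(3) idx[of "fst y"] idx[of "snd y"]] ny by auto
        have "p \<noteq> y" using p ny by auto
        moreover have "gen n p y \<or> gen n y p"
          using p(2) gen_intro2[OF pV[OF p(1)] yV] gen_intro2[OF yV pV[OF p(1)]] by blast
        ultimately show False using Gng G(2) p(1) yG by blast
      qed
    qed
  qed (use G in auto)
  show ?thesis using face mx by (rule facetsI)
qed

lemma path_facetA:
  assumes "n = 2 * m" "A \<in> AA n" "is_path A ps"
  shows "set ps \<in> facets (DeltaA n A)"
proof -
  have "set ps \<in> DeltaA n A" unfolding DeltaA_def using path_face[OF assms(2,3)] is_pathD(4)[OF assms(3)] by auto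
  moreover have "set ps \<in> facets (Delta' n)" using path_facet[OF assms] .
  moreover have "DeltaA n A \<subseteq> Delta' n" unfolding DeltaA_def by blast
  ultimately show ?thesis by (meson facetsD(2) facetsI subsetD)
qed

definition sufpath :: "nat set \<Rightarrow> pos \<Rightarrow> pos list \<Rightarrow> bool" where
  "sufpath A p ps = (ps \<noteq> [] \<and> hd ps = p \<and> fst (last ps) = snd (last ps) \<and> set ps \<subseteq> T A \<and>
     (\<forall>k. Suc k < length ps \<longrightarrow> hstep A (ps ! k) (ps ! Suc k) \<or> vstep A (ps ! k) (ps ! Suc k)))"

definition chain :: "pos set \<Rightarrow> bool" where
  "chain S = (\<forall>q\<in>S. \<forall>q'\<in>S. (fst q \<le> fst q' \<and> snd q' \<le> snd q) \<or> (fst q' \<le> fst q \<and> snd q \<le> snd q'))"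

lemma sufpath_cons:
  assumes "sufpath A p' ps" "p \<in> T A" "hstep A p p' \<or> vstep A p p'"
  shows "sufpath A p (p # ps)"
proof -
  have ne: "ps \<noteq> []" and h: "hd ps = p'" using assms(1) unfolding sufpath_def by auto
  have st: "\<forall>k. Suc k < length (p # ps) \<longrightarrow> hstep A ((p#ps) ! k) ((p#ps) ! Suc k) \<or> vstep A ((p#ps) ! k) ((p#ps) ! Suc k)"
  proof (intro allI impI)
    fix k assume k: "Suc k < length (p # ps)"
    show "hstep A ((p#ps) ! k) ((p#ps) ! Suc k) \<or> vstep A ((p#ps) ! k) ((p#ps) ! Suc k)"
    proof (cases k)
      case 0 then show ?thesis using assms(3) ne h by (simp add: hd_conv_nth)
    next
      case (Suc k') then show ?thesis using assms(1) k unfolding sufpath_def by auto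
    qed
  qed
  show ?thesis using assms ne st unfolding sufpath_def by auto
qed

lemma sufpath_ext:
  assumes "finite A" "p \<in> T A" "S \<subseteq> T A" "chain S" "\<forall>q\<in>S. fst p \<le> fst q \<and> snd q \<le> snd p"
  shows "\<exists>ps. sufpath A p ps \<and> S \<subseteq> set ps"
  using assms(2-5)
proof (induction "card {a\<in>A. fst p \<le> a \<and> a \<le> snd p}" arbitrary: p S rule: less_induct)
  case less
  obtain r c where p: "p = (r, c)" by (cases p)
  have rc: "r \<in> A" "c \<in> A" "r \<le> c" using less.prems(1) p unfolding T_def by auto
  show ?case
  proof (cases "r = c")
    case True
    have "S \<subseteq> {p}"
    proof
      fix q assume "q \<in> S"
      then have "q \<in> T A" "r \<le> fst q" "snd q \<le> c" using less.prems p by auto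
      then show "q \<in> {p}" using True p unfolding T_def by auto
    qed
    moreover have "sufpath A p [p]" unfolding sufpath_def using less.prems(1) p True by auto
    ultimately show ?thesis by (intro exI[of _ "[p]"]) auto
  next
    case False
    then have rlc: "r < c" using rc by simp
    define rp where "rp = Min {a\<in>A. r < a}"
    define cm where "cm = Max {a\<in>A. a < c}"
    have f1: "finite {a\<in>A. r < a}" "{a\<in>A. r < a} \<noteq> {}" using assms(1) rc rlc by auto
    have f2: "finite {a\<in>A. a < c}" "{a\<in>A. a < c} \<noteq> {}" using assms(1) rc rlc by auto
    have rp: "rp \<in> A" "r < rp" "rp \<le> c" "\<And>a. a \<in> A \<Longrightarrow> r < a \<Longrightarrow> rp \<le> a"
      using Min_in[OF f1] Min_le[OF f1(1)] rc rlc unfolding rp_def by auto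
    have cm: "cm \<in> A" "cm < c" "r \<le> cm" "\<And>a. a \<in> A \<Longrightarrow> a < c \<Longrightarrow> a \<le> cm"
      using Max_in[OF f2] Max_ge[OF f2(1)] rc rlc unfolding cm_def by auto
    define S' where "S' = S - {p}"
    have S'T: "S' \<subseteq> T A" using less.prems(2) S'_def by auto
    have chS': "chain S'" using less.prems(3) unfolding chain_def S'_def by auto
    have fin: "finite {a\<in>A. r \<le> a \<and> a \<le> c}" using assms(1) by auto
    show ?thesis
    proof (cases "\<exists>q\<in>S'. snd q = c")
      case True
      then obtain q0 where q0: "q0 \<in> S'" "snd q0 = c" by blast
      have q0r: "r < fst q0" using q0 less.prems(4) p S'_def by (auto simp: prod_eq_iff)
      define p' where "p' = (rp, c)"
      have p'T: "p' \<in> T A" unfolding p'_def T_def using rp rc by auto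
      have bnd: "\<forall>q\<in>S'. fst p' \<le> fst q \<and> snd q \<le> snd p'"
      proof
        fix q assume qS: "q \<in> S'"
        have qA: "fst q \<in> A" using S'T qS unfolding T_def by auto
        have qb: "r \<le> fst q" "snd q \<le> c" "q \<noteq> p" using less.prems(4) qS p S'_def by auto
        have "r < fst q"
        proof -
          have "(fst q \<le> fst q0 \<and> snd q0 \<le> snd q) \<or> (fst q0 \<le> fst q \<and> snd q \<le> snd q0)"
            using chS' qS q0(1) unfolding chain_def by blast
          then show ?thesis
          proof
            assume "fst q \<le> fst q0 \<and> snd q0 \<le> snd q"
            then have "snd q = c" using q0 qb by auto
            then show ?thesis using qb p by (cases q) auto
          next
            assume "fst q0 \<le> fst q \<and> snd q \<le> snd q0"
            then show ?thesis using q0r by auto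
          qed
        qed
        then show "fst p' \<le> fst q \<and> snd q \<le> snd p'" using rp(4)[OF qA] qb p'_def by auto
      qed
      have sub: "{a\<in>A. fst p' \<le> a \<and> a \<le> snd p'} \<subset> {a\<in>A. fst p \<le> a \<and> a \<le> snd p}"
      proof (rule psubsetI)
        show "{a\<in>A. fst p' \<le> a \<and> a \<le> snd p'} \<subseteq> {a\<in>A. fst p \<le> a \<and> a \<le> snd p}"
          using p p'_def rp rc by auto
        have "r \<in> {a\<in>A. fst p \<le> a \<and> a \<le> snd p}" "r \<notin> {a\<in>A. fst p' \<le> a \<and> a \<le> snd p'}"
          using p p'_def rp rc by auto
        then show "{a\<in>A. fst p' \<le> a \<and> a \<le> snd p'} \<noteq> {a\<in>A. fst p \<le> a \<and> a \<le> snd p}" by blast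
      qed
      have "card {a\<in>A. fst p' \<le> a \<and> a \<le> snd p'} < card {a\<in>A. fst p \<le> a \<and> a \<le> snd p}"
        using psubset_card_mono[OF _ sub] fin p by auto
      from less.hyps[OF this p'T S'T chS' bnd] obtain ps where ps: "sufpath A p' ps" "S' \<subseteq> set ps" by blast
      have "vstep A p p'" unfolding vstep_def p'_def p using rp by force
      then have "sufpath A p (p # ps)" using sufpath_cons[OF ps(1) less.prems(1)] by blast
      moreover have "S \<subseteq> set (p # ps)" using ps(2) S'_def by auto
      ultimately show ?thesis by blast
    next
      case False
      define p' where "p' = (r, cm)"
      have p'T: "p' \<in> T A" unfolding p'_def T_def using cm rc by auto
      have bnd: "\<forall>q\<in>S'. fst p' \<le> fst q \<and> snd q \<le> snd p'"
      proof
        fix q assume qS: "q \<in> S'"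
        have qA: "snd q \<in> A" using S'T qS unfolding T_def by auto
        have qb: "r \<le> fst q" "snd q \<le> c" using less.prems(4) qS p S'_def by auto
        have "snd q \<noteq> c" using False qS by blast
        then show "fst p' \<le> fst q \<and> snd q \<le> snd p'" using cm(4)[OF qA] qb p'_def by auto
      qed
      have sub: "{a\<in>A. fst p' \<le> a \<and> a \<le> snd p'} \<subset> {a\<in>A. fst p \<le> a \<and> a \<le> snd p}"
      proof (rule psubsetI)
        show "{a\<in>A. fst p' \<le> a \<and> a \<le> snd p'} \<subseteq> {a\<in>A. fst p \<le> a \<and> a \<le> snd p}"
          using p p'_def cm rc by auto
        have "c \<in> {a\<in>A. fst p \<le> a \<and> a \<le> snd p}" "c \<notin> {a\<in>A. fst p' \<le> a \<and> a \<le> snd p'}"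
          using p p'_def cm rc by auto
        then show "{a\<in>A. fst p' \<le> a \<and> a \<le> snd p'} \<noteq> {a\<in>A. fst p \<le> a \<and> a \<le> snd p}" by blast
      qed
      have "card {a\<in>A. fst p' \<le> a \<and> a \<le> snd p'} < card {a\<in>A. fst p \<le> a \<and> a \<le> snd p}"
        using psubset_card_mono[OF _ sub] fin p by auto
      from less.hyps[OF this p'T S'T chS' bnd] obtain ps where ps: "sufpath A p' ps" "S' \<subseteq> set ps" by blast
      have "hstep A p p'" unfolding hstep_def p'_def p using cm by force
      then have "sufpath A p (p # ps)" using sufpath_cons[OF ps(1) less.prems(1)] by blast
      moreover have "S \<subseteq> set (p # ps)" using ps(2) S'_def by auto
      ultimately show ?thesis by blast
    qed
  qed
qed

lemma path_ext:
  assumes "finite A" "A \<noteq> {}" "S \<subseteq> T A" "chain S"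
  shows "\<exists>ps. is_path A ps \<and> S \<subseteq> set ps"
proof -
  have pT: "(Min A, Max A) \<in> T A" unfolding T_def using assms(1,2) by auto
  have "\<forall>q\<in>S. Min A \<le> fst q \<and> snd q \<le> Max A" using assms(1,3) unfolding T_def by auto
  from sufpath_ext[OF assms(1) pT assms(3,4)] this obtain ps where "sufpath A (Min A, Max A) ps" "S \<subseteq> set ps"
    by auto
  then show ?thesis unfolding sufpath_def is_path_def by blast
qed

lemma face_chain:
  assumes "F \<in> Delta' n"
  shows "chain F"
  unfolding chain_def
proof (intro ballI)
  fix q q' assume q: "q \<in> F" "q' \<in> F"
  obtain i j where qq: "q = (i, j)" by (cases q)
  obtain h k where qq': "q' = (h, k)" by (cases q')
  have V: "q \<in> V n" "q' \<in> V n" using assms q unfolding Delta'_def by auto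
  show "(fst q \<le> fst q' \<and> snd q' \<le> snd q) \<or> (fst q' \<le> fst q \<and> snd q \<le> snd q')"
  proof (cases "q = q'")
    case True then show ?thesis by auto
  next
    case False
    then have "\<not> gen n q q'" "\<not> gen n q' q" using assms q unfolding Delta'_def by auto
    then have "\<not> (i < h \<and> j < k)" "\<not> (h < i \<and> k < j)"
      using gen_intro2[OF V] gen_intro2[OF V(2,1)] qq qq' by auto
    then show ?thesis using qq qq' by auto
  qed
qed

lemma facet_path:
  assumes n: "n = 2 * m" and m: "1 \<le> m" and F: "F \<in> facets (Delta' n)"
  shows "\<exists>A ps. A \<in> AA n \<and> is_path A ps \<and> set ps = F"
proof -
  have Fd: "F \<in> Delta' n" using F facetsD by blast
  have FV: "F \<subseteq> V n" and Fng: "\<And>p q. p \<in> F \<Longrightarrow> q \<in> F \<Longrightarrow> p \<noteq> q \<Longrightarrow> \<not> gen n p q"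
    using Fd unfolding Delta'_def by auto
  define I where "I = fst ` F \<union> snd ` F"
  have I1: "x \<in> I \<Longrightarrow> 1 \<le> x \<and> x \<le> n" for x
    using FV unfolding I_def V_def by auto
  have Ic: "x + y \<noteq> n + 1" if xy: "x \<in> I" "y \<in> I" for x y
  proof
    assume s: "x + y = n + 1"
    obtain p where p: "p \<in> F" "x \<in> {fst p, snd p}" using xy(1) unfolding I_def by auto
    obtain q where q: "q \<in> F" "y \<in> {fst q, snd q}" using xy(2) unfolding I_def by auto
    show False
    proof (cases "p = q")
      case True
      have "p \<in> V n" using FV p by auto
      then have "fst p + snd p \<noteq> n + 1" unfolding V_def by auto
      moreover have "x \<noteq> y" using s n by presburger
      ultimately show False using p q True s by auto
    next
      case False
      have "gen n p q" using gen_intro1[of p n q x y] FV p q s by auto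
      then show False using Fng p q False by auto
    qed
  qed
  define A where "A = {a\<in>{1..n}. a \<in> I \<or> (a \<le> m \<and> n + 1 - a \<notin> I)}"
  have Asub: "A \<subseteq> {1..n}" unfolding A_def by auto
  have Ac: "\<forall>i\<in>A. \<forall>j\<in>A. i + j \<noteq> n + 1"
  proof (intro ballI)
    fix i j assume ij: "i \<in> A" "j \<in> A"
    show "i + j \<noteq> n + 1"
    proof
      assume s: "i + j = n + 1"
      have "j = n + 1 - i" "i = n + 1 - j" using s by auto
      then show False using ij Ic s n unfolding A_def by auto
    qed
  qed
  have inj: "inj_on (phi n) A"
  proof
    fix a b assume ab: "a \<in> A" "b \<in> A" "phi n a = phi n b"
    have "a + b \<noteq> n + 1" using Ac ab by auto
    moreover have "a \<le> n" "b \<le> n" using Asub ab by auto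
    ultimately show "a = b" using ab(3) unfolding phi_def by (auto simp: min_def split: if_splits)
  qed
  have img: "phi n ` A = {1..m}"
  proof
    show "phi n ` A \<subseteq> {1..m}" using Asub n unfolding phi_def by (force simp: min_def)
    show "{1..m} \<subseteq> phi n ` A"
    proof
      fix t assume t: "t \<in> {1..m}"
      have pt: "phi n t = t" "phi n (n + 1 - t) = t" using t n unfolding phi_def by auto
      show "t \<in> phi n ` A"
      proof (cases "t \<in> I \<or> n + 1 - t \<notin> I")
        case True
        then have "t \<in> A" using t n unfolding A_def by auto
        then show ?thesis using pt by (metis imageI)
      next
        case False
        then have "n + 1 - t \<in> A" using t n unfolding A_def by auto
        then show ?thesis using pt by (metis imageI)
      qed
    qed
  qed
  have cardA: "card A = m" using card_image[OF inj] img by simp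
  have AA: "A \<in> AA n" unfolding AA_def using Asub Ac cardA n by auto
  have fin: "finite A" using AA_finite[OF AA] .
  have ne: "A \<noteq> {}" using cardA m by auto
  have IA: "I \<subseteq> A" unfolding A_def using I1 by auto
  have FT: "F \<subseteq> T A"
  proof
    fix p assume "p \<in> F"
    then have "fst p \<in> I" "snd p \<in> I" "fst p \<le> snd p" using FV unfolding I_def V_def by auto
    then show "p \<in> T A" using IA unfolding T_def by auto
  qed
  obtain ps where ps: "is_path A ps" "F \<subseteq> set ps" using path_ext[OF fin ne FT face_chain[OF Fd]] by blast
  have "set ps \<in> Delta' n" using path_face[OF AA ps(1)] .
  then have "set ps = F" using facetsD(2)[OF F _ ps(2)] by simp
  then show ?thesis using AA ps by blast
qed

lemma lex_list:
  assumes "sorted_wrt (<) xs" "sorted_wrt (<) ys" "length xs = length ys"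
  shows "(\<exists>j. j < length xs \<and> j < length ys \<and> take j xs = take j ys \<and> xs!j < ys!j) \<longleftrightarrow>
         (\<exists>a\<in>set xs - set ys. \<forall>b\<in>set ys - set xs. a < (b::nat))"
  using assms(3,1,2)
proof (induction xs ys rule: list_induct2)
  case Nil then show ?case by simp
next
  case (Cons x xs y ys)
  have sx: "\<forall>z\<in>set xs. x < z" "sorted_wrt (<) xs" using Cons.prems by auto
  have sy: "\<forall>z\<in>set ys. y < z" "sorted_wrt (<) ys" using Cons.prems by auto
  have L: "(\<exists>j. j < length (x#xs) \<and> j < length (y#ys) \<and> take j (x#xs) = take j (y#ys) \<and> (x#xs)!j < (y#ys)!j)
     \<longleftrightarrow> x < y \<or> (x = y \<and> (\<exists>j. j < length xs \<and> j < length ys \<and> take j xs = take j ys \<and> xs!j < ys!j))"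
  proof
    assume "\<exists>j. j < length (x#xs) \<and> j < length (y#ys) \<and> take j (x#xs) = take j (y#ys) \<and> (x#xs)!j < (y#ys)!j"
    then obtain j where j: "j < length (x#xs)" "j < length (y#ys)" "take j (x#xs) = take j (y#ys)" "(x#xs)!j < (y#ys)!j" by blast
    show "x < y \<or> (x = y \<and> (\<exists>j. j < length xs \<and> j < length ys \<and> take j xs = take j ys \<and> xs!j < ys!j))"
    proof (cases j)
      case 0 then show ?thesis using j by simp
    next
      case (Suc j') then show ?thesis using j by auto
    qed
  next
    assume "x < y \<or> (x = y \<and> (\<exists>j. j < length xs \<and> j < length ys \<and> take j xs = take j ys \<and> xs!j < ys!j))"
    then show "\<exists>j. j < length (x#xs) \<and> j < length (y#ys) \<and> take j (x#xs) = take j (y#ys) \<and> (x#xs)!j < (y#ys)!j"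
    proof
      assume "x < y" then show ?thesis by (intro exI[of _ 0]) auto
    next
      assume "x = y \<and> (\<exists>j. j < length xs \<and> j < length ys \<and> take j xs = take j ys \<and> xs!j < ys!j)"
      then obtain j where "x = y" "j < length xs" "j < length ys" "take j xs = take j ys" "xs!j < ys!j" by blast
      then show ?thesis by (intro exI[of _ "Suc j"]) auto
    qed
  qed
  consider "x < y" | "y < x" | "x = y" by linarith
  then show ?case
  proof cases
    case 1
    have "x \<in> set (x#xs) - set (y#ys)" using 1 sy by auto
    moreover have "\<forall>b\<in>set (y#ys) - set (x#xs). x < b" using 1 sy by auto
    ultimately show ?thesis using L 1 by blast
  next
    case 2
    have "\<not> (\<exists>a\<in>set (x#xs) - set (y#ys). \<forall>b\<in>set (y#ys) - set (x#xs). a < b)"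
    proof
      assume "\<exists>a\<in>set (x#xs) - set (y#ys). \<forall>b\<in>set (y#ys) - set (x#xs). a < b"
      then obtain a where a: "a \<in> set (x#xs)" "\<forall>b\<in>set (y#ys) - set (x#xs). a < b" by blast
      have "y \<in> set (y#ys) - set (x#xs)" using 2 sx by auto
      then have "a < y" using a by blast
      moreover have "x \<le> a" using a(1) sx by auto
      ultimately show False using 2 by simp
    qed
    then show ?thesis using L 2 by auto
  next
    case 3
    have "x \<notin> set xs" "y \<notin> set ys" using sx sy by auto
    then have "set (x#xs) - set (y#ys) = set xs - set ys" "set (y#ys) - set (x#xs) = set ys - set xs"
      using 3 by auto
    then show ?thesis using L 3 Cons.IH sx(2) sy(2) by auto
  qed
qed

lemma lex_less_iff:
  assumes "finite A" "finite B" "card A = card B"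
  shows "lex_less A B \<longleftrightarrow> (\<exists>a\<in>A - B. \<forall>b\<in>B - A. a < b)"
proof -
  have "lex_less A B \<longleftrightarrow> (\<exists>a\<in>set (sorted_list_of_set A) - set (sorted_list_of_set B).
      \<forall>b\<in>set (sorted_list_of_set B) - set (sorted_list_of_set A). a < b)"
    unfolding lex_less_def Let_def
    by (rule lex_list) (use assms in \<open>auto simp: strict_sorted_list_of_set length_sorted_list_of_set\<close>)
  then show ?thesis using assms by (simp add: set_sorted_list_of_set)
qed

lemma lex_lower:
  assumes n: "n = 2 * m" and AB: "A \<in> AA n" "B \<in> AA n" and l: "lex_less B A"
  shows "\<exists>c\<in>A - B. m < c"
proof -
  have "\<exists>a\<in>B - A. \<forall>b\<in>A - B. a < b"
    using l lex_less_iff[OF AA_finite[OF AB(2)] AA_finite[OF AB(1)]] AA_card[OF AB(1)] AA_card[OF AB(2)] by simp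
  then obtain a where a: "a \<in> B" "a \<notin> A" "\<forall>b\<in>A - B. a < b" by blast
  have a1: "1 \<le> a" "a \<le> n" using AA_sub[OF AB(2) a(1)] by auto
  have a'A: "n + 1 - a \<in> A" using AA_pair[OF n AB(1) a1 a(2)] .
  have a'B: "n + 1 - a \<notin> B" using AA_compl[OF AB(2) a(1), of "n + 1 - a"] a1 by auto
  have "a < n + 1 - a" using a(3) a'A a'B by blast
  then have "m < n + 1 - a" using n by linarith
  then show ?thesis using a'A a'B by blast
qed

lemma lex_upper:
  assumes n: "n = 2 * m" and AB: "A \<in> AA n" "B \<in> AA n" and l: "lex_less A B"
  shows "\<exists>c\<in>A - B. c \<le> m"
proof -
  have "\<exists>a\<in>A - B. \<forall>b\<in>B - A. a < b"
    using l lex_less_iff[OF AA_finite[OF AB(1)] AA_finite[OF AB(2)]] AA_card[OF AB(1)] AA_card[OF AB(2)] by simp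
  then obtain a where a: "a \<in> A" "a \<notin> B" "\<forall>b\<in>B - A. a < b" by blast
  have a1: "1 \<le> a" "a \<le> n" using AA_sub[OF AB(1) a(1)] by auto
  have a'B: "n + 1 - a \<in> B" using AA_pair[OF n AB(2) a1 a(2)] .
  have a'A: "n + 1 - a \<notin> A" using AA_compl[OF AB(1) a(1), of "n + 1 - a"] a1 by auto
  have "a < n + 1 - a" using a(3) a'A a'B by blast
  then have "a \<le> m" using n by linarith
  then show ?thesis using a by blast
qed

lemma swap_AA:
  assumes n: "n = 2 * m" and A: "A \<in> AA n" and c: "c \<in> A"
  shows "insert (n + 1 - c) (A - {c}) \<in> AA n"
proof -
  have c1: "1 \<le> c" "c \<le> n" using AA_sub[OF A c] by auto
  have nc: "n + 1 - c \<notin> A" using AA_compl[OF A c, of "n + 1 - c"] c1 by auto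
  have fin: "finite A" using AA_finite[OF A] .
  have "card (insert (n + 1 - c) (A - {c})) = card A"
  proof -
    have "card A > 0" using fin c card_gt_0_iff by blast
    then show ?thesis using fin nc c by (simp add: card_insert_if card_Diff_singleton)
  qed
  moreover have "insert (n + 1 - c) (A - {c}) \<subseteq> {1..n}" using A c1 unfolding AA_def by auto
  moreover have "\<forall>i\<in>insert (n + 1 - c) (A - {c}). \<forall>j\<in>insert (n + 1 - c) (A - {c}). i + j \<noteq> n + 1"
  proof (intro ballI)
    fix i j assume ij: "i \<in> insert (n + 1 - c) (A - {c})" "j \<in> insert (n + 1 - c) (A - {c})"
    have "n + 1 - c + (n + 1 - c) \<noteq> n + 1" using n c1 by presburger
    moreover have "x \<in> A - {c} \<Longrightarrow> n + 1 - c + x \<noteq> n + 1" for x using c1 by auto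
    moreover have "x \<in> A - {c} \<Longrightarrow> y \<in> A - {c} \<Longrightarrow> x + y \<noteq> n + 1" for x y using AA_compl[OF A] by auto
    moreover have "x \<in> A - {c} \<Longrightarrow> x + (n + 1 - c) \<noteq> n + 1" for x using c1 by auto
    ultimately show "i + j \<noteq> n + 1" using ij by blast
  qed
  ultimately show ?thesis using A unfolding AA_def by auto
qed

lemma swap_lex:
  assumes n: "n = 2 * m" and A: "A \<in> AA n" and c: "c \<in> A"
  shows "m < c \<Longrightarrow> lex_less (insert (n + 1 - c) (A - {c})) A"
    and "c \<le> m \<Longrightarrow> lex_less A (insert (n + 1 - c) (A - {c}))"
proof -
  let ?B = "insert (n + 1 - c) (A - {c})"
  have c1: "1 \<le> c" "c \<le> n" using AA_sub[OF A c] by auto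
  have nc: "n + 1 - c \<notin> A" using AA_compl[OF A c, of "n + 1 - c"] c1 by auto
  have B: "?B \<in> AA n" using swap_AA[OF assms] .
  have fin: "finite A" "finite ?B" using AA_finite A B by blast+
  have cd: "card ?B = card A" using AA_card A B by metis
  have d1: "?B - A = {n + 1 - c}" using nc by auto
  have d2: "A - ?B = {c}" using nc c by auto
  show "lex_less ?B A" if "m < c"
  proof -
    have "n + 1 - c < c" using that n c1 by linarith
    then show ?thesis using lex_less_iff[OF fin(2) fin(1) cd] d1 d2 by auto
  qed
  show "lex_less A ?B" if "c \<le> m"
  proof -
    have "c < n + 1 - c" using that n c1 by linarith
    then show ?thesis using lex_less_iff[OF fin(1) fin(2) cd[symmetric]] d1 d2 by auto
  qed
qed

lemma stepH: "is_path A ps \<Longrightarrow> Suc k < length ps \<Longrightarrow> fst (ps!Suc k) = fst (ps!k) \<Longrightarrow> snd (ps!Suc k) < snd (ps!k)"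
  by (metis less_irrefl step_cases)

lemma stepV: "is_path A ps \<Longrightarrow> Suc k < length ps \<Longrightarrow> snd (ps!Suc k) = snd (ps!k) \<Longrightarrow> fst (ps!k) < fst (ps!Suc k)"
  by (metis less_irrefl step_cases)

lemma step_or: "is_path A ps \<Longrightarrow> Suc k < length ps \<Longrightarrow> fst (ps!Suc k) = fst (ps!k) \<or> snd (ps!Suc k) = snd (ps!k)"
  by (metis step_cases)

lemma nondiag: assumes "is_path A ps" "Suc k < length ps" shows "fst (ps!k) < snd (ps!k)"
proof -
  have t: "fst (ps!Suc k) \<le> snd (ps!Suc k)" using path_T[OF assms(1) assms(2)] by simp
  from step_cases[OF assms, case_names H V] show ?thesis
  proof cases
    case H then show ?thesis using t by linarith
  next
    case V then show ?thesis using t by linarith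
  qed
qed

lemma T1: assumes "is_path A ps" "left_turn ps k" "right_turn ps k" shows False
proof -
  have ne: "ps!(k-1) \<noteq> ps!k" if "0 < k" "k < length ps" for k
  proof -
    have "k - 1 < length ps" "k - 1 \<noteq> k" using that by auto
    then show ?thesis using path_nth_inj[OF assms(1) \<open>k - 1 < length ps\<close> that(2)] by blast
  qed
  have "0 < k \<and> k < length ps \<and> fst (ps!(k-1)) = fst (ps!k) \<and> snd (ps!(k-1)) = snd (ps!k)"
    using assms(2,3) unfolding left_turn_def right_turn_def horiz_def vert_def by auto
  then show False using ne[of k] by (auto simp: prod_eq_iff)
qed

lemma T4:
  assumes "is_path A ps" "left_turn ps k \<or> right_turn ps k" "k < length ps"
  shows "\<not> is_index ps k c"
proof
  assume ix: "is_index ps k c"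
  have km: "0 < k" using assms(2) unfolding left_turn_def right_turn_def by auto
  have o1: "fst (ps!(k-1)) \<noteq> c" "snd (ps!(k-1)) \<noteq> c" using ix km assms(3) unfolding is_index_def by auto
  have o2: "fst (ps!Suc k) \<noteq> c" "snd (ps!Suc k) \<noteq> c" if "Suc k < length ps" using ix that unfolding is_index_def by auto
  have cin: "c = fst (ps!k) \<or> c = snd (ps!k)" using ix unfolding is_index_def by auto
  have lst: "k = length ps - 1 \<Longrightarrow> fst (ps!k) = snd (ps!k)" using path_last[OF assms(1)] by simp
  show False using assms(2) o1 o2 cin lst unfolding left_turn_def right_turn_def horiz_def vert_def
    by auto
qed

lemma isolated0:
  assumes "is_path A ps" "2 \<le> length ps"
  shows "isolated ps 0"
  using assms unfolding isolated_def left_turn_def right_turn_def by auto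

lemma index_col:
  assumes p: "is_path A ps" and k: "Suc k < length ps"
    and out: "fst (ps!Suc k) = fst (ps!k)"
    and inn: "k = 0 \<or> fst (ps!(k-1)) = fst (ps!k)"
  shows "is_index ps k (snd (ps!k))"
  unfolding is_index_def
proof (rule conjI)
  show "snd (ps!k) \<in> {fst (ps!k), snd (ps!k)}" by simp
  show "\<forall>l<length ps. l \<noteq> k \<longrightarrow> fst (ps!l) \<noteq> snd (ps!k) \<and> snd (ps!l) \<noteq> snd (ps!k)"
  proof (intro allI impI)
  fix l assume l: "l < length ps" "l \<noteq> k"
  have s1: "snd (ps!Suc k) < snd (ps!k)" using stepH[OF p k out] .
  have nd: "fst (ps!Suc k) \<le> snd (ps!Suc k)" using path_T[OF p k] by simp
  show "fst (ps!l) \<noteq> snd (ps!k) \<and> snd (ps!l) \<noteq> snd (ps!k)"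
  proof (cases "l < k")
    case True
    then have kk: "k - 1 < length ps" "Suc (k-1) = k" using k by auto
    have "fst (ps!(k-1)) = fst (ps!k)" using inn True by auto
    then have a: "snd (ps!k) < snd (ps!(k-1))" using stepH[OF p, of "k-1"] kk by (metis less_trans_Suc k Suc_lessD)
    have b: "snd (ps!(k-1)) \<le> snd (ps!l)" "fst (ps!l) \<le> fst (ps!k)"
      using path_mono[OF p, of l "k-1"] path_mono[OF p, of l k] True k by auto
    show ?thesis using a b s1 nd out by auto
  next
    case False
    then have "Suc k \<le> l" using l by auto
    then have "snd (ps!l) \<le> snd (ps!Suc k)" using path_mono[OF p _ l(1)] by auto
    moreover have "fst (ps!l) \<le> snd (ps!l)" using path_T[OF p l(1)] by simp
    ultimately show ?thesis using s1 by auto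
  qed
  qed
qed

lemma index_row:
  assumes p: "is_path A ps" and k: "Suc k < length ps"
    and out: "snd (ps!Suc k) = snd (ps!k)"
    and inn: "k = 0 \<or> snd (ps!(k-1)) = snd (ps!k)"
  shows "is_index ps k (fst (ps!k))"
  unfolding is_index_def
proof (rule conjI)
  show "fst (ps!k) \<in> {fst (ps!k), snd (ps!k)}" by simp
  show "\<forall>l<length ps. l \<noteq> k \<longrightarrow> fst (ps!l) \<noteq> fst (ps!k) \<and> snd (ps!l) \<noteq> fst (ps!k)"
  proof (intro allI impI)
  fix l assume l: "l < length ps" "l \<noteq> k"
  have s1: "fst (ps!k) < fst (ps!Suc k)" using stepV[OF p k out] .
  have nd: "fst (ps!Suc k) \<le> snd (ps!Suc k)" using path_T[OF p k] by simp
  show "fst (ps!l) \<noteq> fst (ps!k) \<and> snd (ps!l) \<noteq> fst (ps!k)"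
  proof (cases "l < k")
    case True
    then have kk: "Suc (k-1) = k" using k by auto
    have "snd (ps!(k-1)) = snd (ps!k)" using inn True by auto
    then have a: "fst (ps!(k-1)) < fst (ps!k)" using stepV[OF p, of "k-1"] kk k by (metis Suc_lessD)
    have b: "fst (ps!l) \<le> fst (ps!(k-1))" "snd (ps!k) \<le> snd (ps!l)"
      using path_mono[OF p, of l "k-1"] path_mono[OF p, of l k] True k by auto
    show ?thesis using a b s1 nd out by auto
  next
    case False
    then have "Suc k \<le> l" using l by auto
    then have "fst (ps!Suc k) \<le> fst (ps!l)" using path_mono[OF p _ l(1)] by auto
    moreover have "fst (ps!l) \<le> snd (ps!l)" using path_T[OF p l(1)] by simp
    ultimately show ?thesis using s1 by auto
  qed
  qed
qed

lemma T2:
  assumes p: "is_path A ps" and k: "k < length ps" and c: "is_index ps k c" "is_index ps k c'"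
  shows "c = c'"
proof (cases "length ps = 1")
  case True
  then have "k = 0" using k by simp
  then have "fst (ps!k) = snd (ps!k)" using path_last[OF p] True by simp
  then show ?thesis using c unfolding is_index_def by auto
next
  case False
  then have l2: "2 \<le> length ps" using k by auto
  obtain l where l: "l < length ps" "l \<noteq> k" "fst (ps!l) = fst (ps!k) \<or> snd (ps!l) = snd (ps!k)"
  proof (cases k)
    case 0
    then have "Suc k < length ps" using l2 by simp
    then show ?thesis using that[of "Suc k"] step_or[OF p] by auto
  next
    case (Suc j)
    then have "Suc j < length ps" using k by simp
    then show ?thesis using that[of j] step_or[OF p, of j] Suc by auto
  qed
  have cl: "fst (ps!l) \<noteq> c" "snd (ps!l) \<noteq> c" "fst (ps!l) \<noteq> c'" "snd (ps!l) \<noteq> c'"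
    using c l(1,2) unfolding is_index_def by auto
  have "c \<in> {fst (ps!k), snd (ps!k)}" "c' \<in> {fst (ps!k), snd (ps!k)}" using c unfolding is_index_def by auto
  then show ?thesis using l(3) cl by auto
qed

lemma T3:
  assumes p: "is_path A ps" and iso: "isolated ps k"
  shows "\<exists>c. is_index ps k c"
proof -
  have k: "k < length ps" using iso unfolding isolated_def by simp
  show ?thesis
  proof (cases "length ps = 1")
    case True
    then have "k = 0" using k by simp
    then show ?thesis using True unfolding is_index_def by auto
  next
    case False
    then have l2: "2 \<le> length ps" using k by auto
    have nl: "\<not> left_turn ps k" "\<not> right_turn ps k" using iso unfolding isolated_def by auto
    have kl: "Suc k < length ps"
    proof (rule ccontr)
      assume "\<not> Suc k < length ps"
      then have kk: "k = length ps - 1" "0 < k" using k l2 by auto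
      then obtain j where j: "k = Suc j" using gr0_conv_Suc by blast
      have "Suc j < length ps" using j k by simp
      then have "fst (ps!Suc j) = fst (ps!j) \<or> snd (ps!Suc j) = snd (ps!j)" using step_or[OF p] by blast
      then have "fst (ps!(k-1)) = fst (ps!k) \<or> snd (ps!(k-1)) = snd (ps!k)" using j by auto
      then have "left_turn ps k \<or> right_turn ps k"
        unfolding left_turn_def right_turn_def horiz_def vert_def using kk(1) l2 by blast
      then show False using nl by blast
    qed
    show ?thesis
    proof (cases k)
      case 0
      then show ?thesis using index_col[OF p kl] index_row[OF p kl] step_or[OF p kl] by blast
    next
      case (Suc j)
      have jl: "Suc j < length ps" using Suc k by simp
      have a: "fst (ps!Suc j) = fst (ps!j) \<or> snd (ps!Suc j) = snd (ps!j)" using step_or[OF p jl] .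
      have b: "fst (ps!Suc k) = fst (ps!k) \<or> snd (ps!Suc k) = snd (ps!k)" using step_or[OF p kl] .
      have c1: "\<not> (fst (ps!j) = fst (ps!k) \<and> snd (ps!k) = snd (ps!Suc k))"
        using nl(1) kl Suc unfolding left_turn_def horiz_def vert_def by auto
      have c2: "\<not> (snd (ps!j) = snd (ps!k) \<and> fst (ps!k) = fst (ps!Suc k))"
        using nl(2) kl Suc unfolding right_turn_def horiz_def vert_def by auto
      from a b c1 c2 Suc have "(fst (ps!j) = fst (ps!k) \<and> fst (ps!Suc k) = fst (ps!k)) \<or>
         (snd (ps!j) = snd (ps!k) \<and> snd (ps!Suc k) = snd (ps!k))" by auto
      then show ?thesis using index_col[OF p kl] index_row[OF p kl] Suc by auto
    qed
  qed
qed

lemma notminus: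
  assumes p: "is_path A ps" and k: "k < length ps"
    and h: "left_turn ps k \<or> (isolated ps k \<and> is_index ps k c \<and> c \<le> m)"
  shows "ps!k \<notin> minus_list m ps"
proof
  assume "ps!k \<in> minus_list m ps"
  then obtain k' where k': "k' < length ps" "ps!k = ps!k'"
    "right_turn ps k' \<or> (isolated ps k' \<and> (\<exists>c. is_index ps k' c \<and> c > m))"
    unfolding minus_list_def by auto
  have "k' = k" using path_nth_inj[OF p k k'(1) k'(2)] by simp
  then show False using k'(3) h T1[OF p] T2[OF p k] unfolding isolated_def by force
qed

lemma inminus:
  assumes "k < length ps" "right_turn ps k \<or> (isolated ps k \<and> is_index ps k c \<and> m < c)"
  shows "ps!k \<in> minus_list m ps"
  using assms unfolding minus_list_def by blast

lemma L1:
  assumes fin: "finite A" and p: "is_path A ps" and c: "c \<in> A" "m < c"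
  shows "\<exists>x\<in>minus_list m ps. fst x = c \<or> snd x = c"
proof -
  define S where "S = {k. k < length ps \<and> (fst (ps!k) = c \<or> snd (ps!k) = c)}"
  have Sne: "S \<noteq> {}" using path_cover[OF fin p c(1)] S_def by auto
  have Sfin: "finite S" unfolding S_def by auto
  define k1 where "k1 = Max S"
  have k1S: "k1 \<in> S" using Max_in Sfin Sne k1_def by auto
  have k1max: "\<And>l. l \<in> S \<Longrightarrow> l \<le> k1" using Sfin k1_def by auto
  have k1l: "k1 < length ps" using k1S S_def by auto
  have k1c: "fst (ps!k1) = c \<or> snd (ps!k1) = c" using k1S S_def by auto
  show ?thesis
  proof (cases "\<exists>l\<in>S. l \<noteq> k1")
    case False
    then have ix: "is_index ps k1 c" unfolding is_index_def using k1c S_def by auto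
    have "\<not> left_turn ps k1" using T4[OF p _ k1l] ix by blast
    then have "right_turn ps k1 \<or> isolated ps k1" unfolding isolated_def using k1l by blast
    then have "ps!k1 \<in> minus_list m ps" using inminus[OF k1l] ix c(2) by blast
    then show ?thesis using k1c by auto
  next
    case True
    then obtain l where l: "l \<in> S" "l \<noteq> k1" by blast
    then have lk: "l < k1" using k1max by fastforce
    then obtain j where j: "k1 = Suc j" using gr0_conv_Suc by (metis gr_zeroI less_nat_zero_code)
    have jl: "Suc j < length ps" using j k1l by simp
    have lj: "l \<le> j" using lk j by simp
    have lS: "l < length ps" "fst (ps!l) = c \<or> snd (ps!l) = c" using l S_def by auto
    from step_cases[OF p jl, case_names H V] show ?thesis
    proof cases
      case V
      have sc: "snd (ps!k1) = c"
      proof (rule ccontr)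
        assume ns: "snd (ps!k1) \<noteq> c"
        then have fk: "fst (ps!k1) = c" using k1c by auto
        have "l \<noteq> j"
        proof
          assume "l = j" then show False using V lS(2) fk ns j by auto
        qed
        then have "l < j" using lj by simp
        have "fst (ps!l) \<le> fst (ps!j)" using path_mono[OF p, of l j] \<open>l < j\<close> jl by auto
        then have "fst (ps!l) < c" using V fk j by auto
        then have "snd (ps!l) = c" using lS by auto
        moreover have "snd (ps!k1) \<le> snd (ps!l)" using path_mono[OF p, of l k1] lk k1l by auto
        moreover have "fst (ps!k1) \<le> snd (ps!k1)" using path_T[OF p k1l] by simp
        ultimately show False using fk ns by auto
      qed
      have rt: "right_turn ps k1"
      proof (cases "Suc k1 < length ps")
        case True
        have "fst (ps!Suc k1) = fst (ps!k1)"
        proof (rule ccontr)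
          assume "fst (ps!Suc k1) \<noteq> fst (ps!k1)"
          then have "snd (ps!Suc k1) = snd (ps!k1)" using step_or[OF p True] by auto
          then have "Suc k1 \<in> S" using sc True S_def by auto
          then show False using k1max by fastforce
        qed
        then show ?thesis unfolding right_turn_def horiz_def vert_def using True V j by auto
      next
        case False
        then show ?thesis unfolding right_turn_def vert_def using V j k1l by auto
      qed
      have "ps!k1 \<in> minus_list m ps" using inminus[OF k1l] rt by blast
      then show ?thesis using sc by blast
    next
      case H
      have fc: "fst (ps!k1) = c"
      proof (rule ccontr)
        assume nf: "fst (ps!k1) \<noteq> c"
        then have sk: "snd (ps!k1) = c" using k1c by auto
        have "l \<noteq> j"
        proof
          assume "l = j" then show False using H lS(2) sk nf j by auto
        qed
        then have "l < j" using lj by simp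
        have "snd (ps!j) \<le> snd (ps!l)" using path_mono[OF p, of l j] \<open>l < j\<close> jl by auto
        then have "c < snd (ps!l)" using H sk j by auto
        then have "fst (ps!l) = c" using lS by auto
        moreover have "fst (ps!l) \<le> fst (ps!k1)" using path_mono[OF p, of l k1] lk k1l by auto
        moreover have "fst (ps!k1) \<le> snd (ps!k1)" using path_T[OF p k1l] by simp
        ultimately show False using sk nf by auto
      qed
      define R where "R = {i. i < length ps \<and> fst (ps!i) = c}"
      have jR: "j \<in> R" using H fc j jl R_def by auto
      define j0 where "j0 = Min R"
      have Rfin: "finite R" unfolding R_def by auto
      have j0R: "j0 \<in> R" using Min_in Rfin jR j0_def by blast
      have j0le: "j0 \<le> j" using Min_le Rfin jR j0_def by blast
      have j0min: "\<And>i. i \<in> R \<Longrightarrow> j0 \<le> i" using Min_le Rfin j0_def by blast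
      have j0l: "Suc j0 < length ps" using j0le jl by simp
      have f0: "fst (ps!j0) = c" using j0R R_def by auto
      have f1: "fst (ps!Suc j0) = c"
      proof -
        have "fst (ps!j0) \<le> fst (ps!Suc j0)" "fst (ps!Suc j0) \<le> fst (ps!k1)"
          using path_mono[OF p, of j0 "Suc j0"] path_mono[OF p, of "Suc j0" k1] j0l j0le j k1l by auto
        then show ?thesis using f0 fc by auto
      qed
      have hout: "fst (ps!Suc j0) = fst (ps!j0)" using f1 f0 by simp
      show ?thesis
      proof (cases j0)
        case 0
        have l2: "2 \<le> length ps" using jl by simp
        have iso: "isolated ps 0" using isolated0[OF p l2] .
        have ix: "is_index ps 0 (snd (ps!0))" using index_col[OF p, of 0] j0l hout 0 by auto
        have e: "snd (ps!0) = Max A" "fst (ps!0) = Min A" using path_0[OF p] by auto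
        have "Min A \<le> Max A" using fin c(1) by (meson Max_ge Min_le order_trans)
        then have "m < snd (ps!0)" using c e f0 0 by auto
        moreover have "0 < length ps" using l2 by linarith
        ultimately have "ps!0 \<in> minus_list m ps" using inminus[of 0 ps "snd (ps!0)" m] iso ix by blast
        then show ?thesis using f0 0 by blast
      next
        case (Suc i)
        have il: "Suc i < length ps" using Suc j0l by simp
        have vin: "snd (ps!Suc i) = snd (ps!i)"
        proof (rule ccontr)
          assume "snd (ps!Suc i) \<noteq> snd (ps!i)"
          then have "fst (ps!Suc i) = fst (ps!i)" using step_or[OF p il] by auto
          then have "i \<in> R" using f0 Suc R_def il by auto
          then show False using j0min Suc by fastforce
        qed
        have rt: "right_turn ps j0" unfolding right_turn_def horiz_def vert_def using Suc vin hout j0l by auto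
        have "ps!j0 \<in> minus_list m ps" using inminus[of j0 ps] rt j0l by auto
        then show ?thesis using f0 by blast
      qed
    qed
  qed
qed

lemma L2:
  assumes fin: "finite A" and p: "is_path A ps" and c: "c \<in> A" "c \<le> m"
  shows "\<exists>x\<in>set ps - minus_list m ps. fst x = c \<or> snd x = c"
proof -
  define S where "S = {k. k < length ps \<and> (fst (ps!k) = c \<or> snd (ps!k) = c)}"
  have Sne: "S \<noteq> {}" using path_cover[OF fin p c(1)] S_def by auto
  have Sfin: "finite S" unfolding S_def by auto
  define k0 where "k0 = Min S"
  have k0S: "k0 \<in> S" using Min_in Sfin Sne k0_def by auto
  have k0min: "\<And>l. l \<in> S \<Longrightarrow> k0 \<le> l" using Sfin k0_def by auto
  have k0l: "k0 < length ps" using k0S S_def by auto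
  have k0c: "fst (ps!k0) = c \<or> snd (ps!k0) = c" using k0S S_def by auto
  show ?thesis
  proof (cases "\<exists>l\<in>S. l \<noteq> k0")
    case False
    then have ix: "is_index ps k0 c" unfolding is_index_def using k0c S_def by auto
    have "\<not> right_turn ps k0" using T4[OF p _ k0l] ix by blast
    then have "left_turn ps k0 \<or> isolated ps k0" unfolding isolated_def using k0l by blast
    then have "ps!k0 \<notin> minus_list m ps" using notminus[OF p k0l] ix c(2) by blast
    then show ?thesis using k0c k0l by auto
  next
    case True
    then obtain l where l: "l \<in> S" "l \<noteq> k0" by blast
    then have lk: "k0 < l" using k0min by fastforce
    have lS: "l < length ps" "fst (ps!l) = c \<or> snd (ps!l) = c" using l S_def by auto
    have kl: "Suc k0 < length ps" using lk lS by simp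
    from step_cases[OF p kl, case_names H V] show ?thesis
    proof cases
      case H
      have fc: "fst (ps!k0) = c"
      proof (rule ccontr)
        assume nf: "fst (ps!k0) \<noteq> c"
        then have sk: "snd (ps!k0) = c" using k0c by auto
        have "l \<noteq> Suc k0"
        proof
          assume "l = Suc k0" then show False using H lS(2) sk nf by auto
        qed
        then have "Suc k0 < l" using lk by simp
        have "snd (ps!l) \<le> snd (ps!Suc k0)" using path_mono[OF p, of "Suc k0" l] \<open>Suc k0 < l\<close> lS by auto
        then have "snd (ps!l) < c" using H sk by auto
        moreover have "fst (ps!l) \<le> snd (ps!l)" using path_T[OF p lS(1)] by simp
        ultimately show False using lS(2) by auto
      qed
      define R where "R = {i. i < length ps \<and> fst (ps!i) = c}"
      have jR: "Suc k0 \<in> R" using H fc kl R_def by auto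
      define j1 where "j1 = Max R"
      have Rfin: "finite R" unfolding R_def by auto
      have j1R: "j1 \<in> R" using Max_in Rfin jR j1_def by blast
      have j1ge: "Suc k0 \<le> j1" using Max_ge Rfin jR j1_def by blast
      have j1max: "\<And>i. i \<in> R \<Longrightarrow> i \<le> j1" using Max_ge Rfin j1_def by blast
      have j1l: "j1 < length ps" using j1R R_def by auto
      have f1: "fst (ps!j1) = c" using j1R R_def by auto
      obtain i where i: "j1 = Suc i" using j1ge by (metis Suc_le_D)
      have hin: "fst (ps!i) = fst (ps!j1)"
      proof -
        have "fst (ps!k0) \<le> fst (ps!i)" "fst (ps!i) \<le> fst (ps!j1)"
          using path_mono[OF p, of k0 i] path_mono[OF p, of i j1] i j1ge j1l by auto
        then show ?thesis using fc f1 by auto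
      qed
      have lt: "left_turn ps j1"
      proof (cases "Suc j1 < length ps")
        case True
        have "snd (ps!Suc j1) = snd (ps!j1)"
        proof (rule ccontr)
          assume "snd (ps!Suc j1) \<noteq> snd (ps!j1)"
          then have "fst (ps!Suc j1) = fst (ps!j1)" using step_or[OF p True] by auto
          then have "Suc j1 \<in> R" using f1 True R_def by auto
          then show False using j1max by fastforce
        qed
        then show ?thesis unfolding left_turn_def horiz_def vert_def using True hin i by auto
      next
        case False
        then show ?thesis unfolding left_turn_def horiz_def using hin i j1l by auto
      qed
      have "ps!j1 \<notin> minus_list m ps" using notminus[OF p j1l] lt by blast
      then show ?thesis using f1 j1l by auto
    next
      case V
      have sc: "snd (ps!k0) = c"
      proof (rule ccontr)
        assume ns: "snd (ps!k0) \<noteq> c"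
        then have fk: "fst (ps!k0) = c" using k0c by auto
        have "l \<noteq> Suc k0"
        proof
          assume "l = Suc k0" then show False using V lS(2) fk ns by auto
        qed
        then have "Suc k0 < l" using lk by simp
        have "fst (ps!Suc k0) \<le> fst (ps!l)" using path_mono[OF p, of "Suc k0" l] \<open>Suc k0 < l\<close> lS by auto
        then have "c < fst (ps!l)" using V fk by auto
        moreover have "fst (ps!l) \<le> snd (ps!l)" using path_T[OF p lS(1)] by simp
        ultimately show False using lS(2) by auto
      qed
      define R where "R = {i. i < length ps \<and> snd (ps!i) = c}"
      have kR: "k0 \<in> R" using sc k0l R_def by auto
      define j0 where "j0 = Min R"
      have Rfin: "finite R" unfolding R_def by auto
      have j0R: "j0 \<in> R" using Min_in Rfin kR j0_def by blast
      have j0le: "j0 \<le> k0" using Min_le Rfin kR j0_def by blast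
      have j0min: "\<And>i. i \<in> R \<Longrightarrow> j0 \<le> i" using Min_le Rfin j0_def by blast
      have j0l: "Suc j0 < length ps" using j0le kl by simp
      have s0: "snd (ps!j0) = c" using j0R R_def by auto
      have s1: "snd (ps!Suc j0) = c"
      proof -
        have "snd (ps!Suc j0) \<le> snd (ps!j0)" "snd (ps!Suc k0) \<le> snd (ps!Suc j0)"
          using path_mono[OF p, of j0 "Suc j0"] path_mono[OF p, of "Suc j0" "Suc k0"] j0l j0le kl by auto
        then show ?thesis using s0 sc V by auto
      qed
      have vout: "snd (ps!Suc j0) = snd (ps!j0)" using s0 s1 by simp
      show ?thesis
      proof (cases j0)
        case 0
        have l2: "2 \<le> length ps" using kl by simp
        have iso: "isolated ps 0" using isolated0[OF p l2] .
        have ix: "is_index ps 0 (fst (ps!0))" using index_row[OF p, of 0] j0l vout 0 by auto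
        have e: "snd (ps!0) = Max A" "fst (ps!0) = Min A" using path_0[OF p] by auto
        have "Min A \<le> Max A" using fin c(1) by (meson Max_ge Min_le order_trans)
        then have "fst (ps!0) \<le> m" using c e s0 0 by auto
        moreover have "0 < length ps" using l2 by linarith
        ultimately have "ps!0 \<notin> minus_list m ps" using notminus[OF p, of 0 "fst (ps!0)" m] iso ix by blast
        moreover have "ps!0 \<in> set ps" using l2 by (intro nth_mem) linarith
        ultimately show ?thesis using s0 0 by blast
      next
        case (Suc i)
        have il: "Suc i < length ps" using Suc j0l by simp
        have hin: "fst (ps!Suc i) = fst (ps!i)"
        proof (rule ccontr)
          assume "fst (ps!Suc i) \<noteq> fst (ps!i)"
          then have "snd (ps!Suc i) = snd (ps!i)" using step_or[OF p il] by auto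
          then have "i \<in> R" using s0 Suc R_def il by auto
          then show False using j0min Suc by fastforce
        qed
        have lt: "left_turn ps j0" unfolding left_turn_def horiz_def vert_def using Suc hin vout j0l by auto
        have "ps!j0 \<notin> minus_list m ps" using notminus[OF p, of j0] lt j0l by auto
        then show ?thesis using s0 j0l by auto
      qed
    qed
  qed
qed

lemma PC1:
  assumes p: "is_path A ps" and q: "is_path A qs" and pl: "path_less qs ps"
  shows "\<exists>x\<in>minus_list m ps. x \<notin> set qs"
proof -
  obtain k where k: "0 < k" "k < length qs" "k < length ps" "take k qs = take k ps" "qs!k \<noteq> ps!k"
    "fst (qs!k) = fst (qs!(k-1))" "snd (ps!k) = snd (ps!(k-1))"
    using pl unfolding path_less_def by blast
  obtain j where j: "k = Suc j" using k(1) gr0_conv_Suc by blast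
  have eqi: "\<And>i. i < k \<Longrightarrow> qs!i = ps!i" using k(4) by (metis nth_take)
  have qH: "snd (qs!k) < snd (qs!j)" using stepH[OF q, of j] k(2,6) j by auto
  define c where "c = snd (ps!k)"
  have sj: "snd (ps!j) = c" using k(7) j c_def by simp
  define R where "R = {i. i < length ps \<and> snd (ps!i) = c}"
  have kR: "k \<in> R" using k(3) R_def c_def by auto
  define j1 where "j1 = Max R"
  have Rfin: "finite R" unfolding R_def by auto
  have j1R: "j1 \<in> R" using Max_in Rfin kR j1_def by blast
  have j1ge: "k \<le> j1" using Max_ge Rfin kR j1_def by blast
  have j1max: "\<And>i. i \<in> R \<Longrightarrow> i \<le> j1" using Max_ge Rfin j1_def by blast
  have j1l: "j1 < length ps" using j1R R_def by auto
  have s1: "snd (ps!j1) = c" using j1R R_def by auto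
  obtain i where i: "j1 = Suc i" using j1ge k(1) by (metis gr0_conv_Suc less_le_trans)
  have vin: "snd (ps!i) = snd (ps!j1)"
  proof -
    have "snd (ps!i) \<le> snd (ps!j)" "snd (ps!j1) \<le> snd (ps!i)"
      using path_mono[OF p, of j i] path_mono[OF p, of i j1] i j j1ge j1l by auto
    then show ?thesis using sj s1 by auto
  qed
  have rt: "right_turn ps j1"
  proof (cases "Suc j1 < length ps")
    case True
    have "fst (ps!Suc j1) = fst (ps!j1)"
    proof (rule ccontr)
      assume "fst (ps!Suc j1) \<noteq> fst (ps!j1)"
      then have "snd (ps!Suc j1) = snd (ps!j1)" using step_or[OF p True] by auto
      then have "Suc j1 \<in> R" using s1 True R_def by auto
      then show False using j1max by fastforce
    qed
    then show ?thesis unfolding right_turn_def horiz_def vert_def using True vin i by auto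
  next
    case False
    then show ?thesis unfolding right_turn_def vert_def using vin i j1l by auto
  qed
  have "ps!j1 \<notin> set qs"
  proof
    assume "ps!j1 \<in> set qs"
    then obtain i' where i': "i' < length qs" "qs!i' = ps!j1" by (auto simp: in_set_conv_nth)
    show False
    proof (cases "i' < k")
      case True
      then have "ps!i' = ps!j1" using eqi i' by auto
      then have "i' = j1" using path_nth_inj[OF p _ j1l] True k(3) by auto
      then show False using True j1ge by simp
    next
      case False
      then have "snd (qs!i') \<le> snd (qs!k)" using path_mono[OF q, of k i'] i' by auto
      moreover have "qs!j = ps!j" using eqi j by simp
      ultimately have "snd (qs!i') < c" using qH sj by auto
      then show False using i' s1 by auto
    qed
  qed
  moreover have "ps!j1 \<in> minus_list m ps" using inminus[OF j1l] rt by blast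
  ultimately show ?thesis by blast
qed

lemma PC2:
  assumes p: "is_path A ps" and q: "is_path A qs" and pl: "path_less ps qs"
  shows "\<exists>x\<in>set ps - minus_list m ps. x \<notin> set qs"
proof -
  obtain k where k: "0 < k" "k < length ps" "k < length qs" "take k ps = take k qs" "ps!k \<noteq> qs!k"
    "fst (ps!k) = fst (ps!(k-1))" "snd (qs!k) = snd (qs!(k-1))"
    using pl unfolding path_less_def by blast
  obtain j where j: "k = Suc j" using k(1) gr0_conv_Suc by blast
  have eqi: "\<And>i. i < k \<Longrightarrow> qs!i = ps!i" using k(4) by (metis nth_take)
  have qV: "fst (qs!j) < fst (qs!k)" using stepV[OF q, of j] k(3,7) j by auto
  define r where "r = fst (ps!k)"
  have fj: "fst (ps!j) = r" using k(6) j r_def by simp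
  define R where "R = {i. i < length ps \<and> fst (ps!i) = r}"
  have kR: "k \<in> R" using k(2) R_def r_def by auto
  define j1 where "j1 = Max R"
  have Rfin: "finite R" unfolding R_def by auto
  have j1R: "j1 \<in> R" using Max_in Rfin kR j1_def by blast
  have j1ge: "k \<le> j1" using Max_ge Rfin kR j1_def by blast
  have j1max: "\<And>i. i \<in> R \<Longrightarrow> i \<le> j1" using Max_ge Rfin j1_def by blast
  have j1l: "j1 < length ps" using j1R R_def by auto
  have f1: "fst (ps!j1) = r" using j1R R_def by auto
  obtain i where i: "j1 = Suc i" using j1ge k(1) by (metis gr0_conv_Suc less_le_trans)
  have hin: "fst (ps!i) = fst (ps!j1)"
  proof -
    have "fst (ps!j) \<le> fst (ps!i)" "fst (ps!i) \<le> fst (ps!j1)"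
      using path_mono[OF p, of j i] path_mono[OF p, of i j1] i j j1ge j1l by auto
    then show ?thesis using fj f1 by auto
  qed
  have lt: "left_turn ps j1"
  proof (cases "Suc j1 < length ps")
    case True
    have "snd (ps!Suc j1) = snd (ps!j1)"
    proof (rule ccontr)
      assume "snd (ps!Suc j1) \<noteq> snd (ps!j1)"
      then have "fst (ps!Suc j1) = fst (ps!j1)" using step_or[OF p True] by auto
      then have "Suc j1 \<in> R" using f1 True R_def by auto
      then show False using j1max by fastforce
    qed
    then show ?thesis unfolding left_turn_def horiz_def vert_def using True hin i by auto
  next
    case False
    then show ?thesis unfolding left_turn_def horiz_def using hin i j1l by auto
  qed
  have "ps!j1 \<notin> set qs"
  proof
    assume "ps!j1 \<in> set qs"
    then obtain i' where i': "i' < length qs" "qs!i' = ps!j1" by (auto simp: in_set_conv_nth)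
    show False
    proof (cases "i' < k")
      case True
      then have "ps!i' = ps!j1" using eqi i' by auto
      then have "i' = j1" using path_nth_inj[OF p _ j1l] True k(2) by auto
      then show False using True j1ge by simp
    next
      case False
      then have "fst (qs!k) \<le> fst (qs!i')" using path_mono[OF q, of k i'] i' by auto
      moreover have "qs!j = ps!j" using eqi j by simp
      ultimately have "r < fst (qs!i')" using qV fj by auto
      then show False using i' f1 by auto
    qed
  qed
  moreover have "ps!j1 \<notin> minus_list m ps" using notminus[OF p j1l] lt by blast
  ultimately show ?thesis using j1l by auto
qed

lemma step_h: "is_path A ps \<Longrightarrow> Suc i < length ps \<Longrightarrow> fst (ps!Suc i) = fst (ps!i) \<Longrightarrow> hstep A (ps!i) (ps!Suc i)"
  using is_pathD(5) unfolding hstep_def vstep_def by (metis less_irrefl)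

lemma step_v: "is_path A ps \<Longrightarrow> Suc i < length ps \<Longrightarrow> snd (ps!Suc i) = snd (ps!i) \<Longrightarrow> vstep A (ps!i) (ps!Suc i)"
  using is_pathD(5) unfolding hstep_def vstep_def by (metis less_irrefl)

lemma replace_path:
  assumes p: "is_path A ps" and k: "0 < k" "k < length ps" and yT: "y \<in> T A"
    and s1: "hstep A (ps!(k-1)) y \<or> vstep A (ps!(k-1)) y"
    and s2: "Suc k < length ps \<Longrightarrow> hstep A y (ps!Suc k) \<or> vstep A y (ps!Suc k)"
    and dg: "Suc k = length ps \<Longrightarrow> fst y = snd y"
  shows "is_path A (ps[k := y])"
proof -
  let ?q = "ps[k := y]"
  have ne: "?q \<noteq> []" using k by auto
  have "hd ?q = ?q ! 0" using ne by (simp add: hd_conv_nth)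
  also have "\<dots> = ps ! 0" using k by simp
  finally have hd: "hd ?q = (Min A, Max A)" using path_0[OF p] by simp
  have lst: "fst (last ?q) = snd (last ?q)"
  proof (cases "Suc k = length ps")
    case True
    then have "length ps - 1 = k" by simp
    then show ?thesis using dg[OF True] ne k by (simp add: last_conv_nth)
  next
    case False
    then have "length ps - 1 \<noteq> k" using k by auto
    then show ?thesis using path_last[OF p] ne by (simp add: last_conv_nth)
  qed
  have st: "set ?q \<subseteq> T A" using is_pathD(4)[OF p] yT set_update_subset_insert by fastforce
  have steps: "\<forall>i. Suc i < length ?q \<longrightarrow> hstep A (?q ! i) (?q ! Suc i) \<or> vstep A (?q ! i) (?q ! Suc i)"
  proof (intro allI impI)
    fix i assume i: "Suc i < length ?q"
    consider "Suc i = k" | "i = k" | "Suc i \<noteq> k" "i \<noteq> k" by blast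
    then show "hstep A (?q ! i) (?q ! Suc i) \<or> vstep A (?q ! i) (?q ! Suc i)"
    proof cases
      case 1 then show ?thesis using s1 i by auto
    next
      case 2 then show ?thesis using s2 i by auto
    next
      case 3 then show ?thesis using is_pathD(5)[OF p, of i] i by auto
    qed
  qed
  show ?thesis unfolding is_path_def using ne hd lst st steps by blast
qed

lemma replace_set: "k < length ps \<Longrightarrow> distinct ps \<Longrightarrow> set ps - {ps!k} \<subseteq> set (ps[k := y])"
proof
  fix x assume "k < length ps" "distinct ps" "x \<in> set ps - {ps!k}"
  then obtain i where i: "i < length ps" "x = ps!i" "i \<noteq> k" by (auto simp: in_set_conv_nth)
  then have "ps[k := y] ! i = x" by simp
  then show "x \<in> set (ps[k := y])" using i by (metis length_list_update nth_mem)
qed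

lemma flip_right:
  assumes p: "is_path A ps" and k: "k < length ps" and rt: "right_turn ps k"
  shows "\<exists>qs. is_path A qs \<and> path_less qs ps \<and> set ps - {ps!k} \<subseteq> set qs"
proof -
  have k0: "0 < k" using rt unfolding right_turn_def by auto
  obtain j where j: "k = Suc j" using k0 gr0_conv_Suc by blast
  have jl: "Suc j < length ps" using j k by simp
  have vin: "snd (ps!k) = snd (ps!j)" using rt j unfolding right_turn_def vert_def by auto
  have V: "vstep A (ps!j) (ps!k)" using step_v[OF p jl] vin j by simp
  have pT: "\<And>i. i < length ps \<Longrightarrow> fst (ps!i) \<in> A \<and> snd (ps!i) \<in> A \<and> fst (ps!i) \<le> snd (ps!i)"
    using path_T[OF p] by blast
  show ?thesis
  proof (cases "Suc k < length ps")
    case True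
    have hout: "fst (ps!Suc k) = fst (ps!k)" using rt True j unfolding right_turn_def horiz_def by auto
    have H: "hstep A (ps!k) (ps!Suc k)" using step_h[OF p True hout] .
    define y where "y = (fst (ps!j), snd (ps!Suc k))"
    have yT: "y \<in> T A" using pT[OF Suc_lessD[OF jl]] pT[of "Suc k"] V H True unfolding y_def T_def vstep_def hstep_def by auto
    have s1: "hstep A (ps!(k-1)) y" using V H vin j unfolding y_def hstep_def vstep_def by auto
    have s2: "vstep A y (ps!Suc k)" using V H hout j unfolding y_def hstep_def vstep_def by auto
    have qp: "is_path A (ps[k := y])" using replace_path[OF p k0 k yT] s1 s2 True by auto
    have ne: "y \<noteq> ps!k"
    proof
      assume "y = ps!k" then have "fst y = fst (ps!k)" by simp
      then show False using V unfolding y_def vstep_def by simp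
    qed
    have "path_less (ps[k := y]) ps" unfolding path_less_def
      using k0 k ne vin j by (intro exI[of _ k]) (auto simp: y_def take_update_cancel)
    then show ?thesis using qp replace_set[OF k path_distinct[OF p]] by blast
  next
    case False
    then have kl: "Suc k = length ps" using k by simp
    have dgk: "fst (ps!k) = snd (ps!k)" using path_last[OF p] kl by (metis diff_Suc_1)
    define y where "y = (fst (ps!j), fst (ps!j))"
    have yT: "y \<in> T A" using pT[of j] jl unfolding y_def T_def by auto
    have s1: "hstep A (ps!(k-1)) y" using V vin dgk j pT[of j] jl unfolding y_def hstep_def vstep_def by auto
    have qp: "is_path A (ps[k := y])" using replace_path[OF p k0 k yT] s1 kl by (auto simp: y_def)
    have ne: "y \<noteq> ps!k"
    proof
      assume "y = ps!k" then have "fst y = fst (ps!k)" by simp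
      then show False using V unfolding y_def vstep_def by simp
    qed
    have "path_less (ps[k := y]) ps" unfolding path_less_def
      using k0 k ne vin j by (intro exI[of _ k]) (auto simp: y_def take_update_cancel)
    then show ?thesis using qp replace_set[OF k path_distinct[OF p]] by blast
  qed
qed

lemma flip_left:
  assumes p: "is_path A ps" and k: "k < length ps" and lt: "left_turn ps k"
  shows "\<exists>qs. is_path A qs \<and> path_less ps qs \<and> set ps - {ps!k} \<subseteq> set qs"
proof -
  have k0: "0 < k" using lt unfolding left_turn_def by auto
  obtain j where j: "k = Suc j" using k0 gr0_conv_Suc by blast
  have jl: "Suc j < length ps" using j k by simp
  have hin: "fst (ps!k) = fst (ps!j)" using lt j unfolding left_turn_def horiz_def by auto
  have H: "hstep A (ps!j) (ps!k)" using step_h[OF p jl] hin j by simp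
  have pT: "\<And>i. i < length ps \<Longrightarrow> fst (ps!i) \<in> A \<and> snd (ps!i) \<in> A \<and> fst (ps!i) \<le> snd (ps!i)"
    using path_T[OF p] by blast
  show ?thesis
  proof (cases "Suc k < length ps")
    case True
    have vout: "snd (ps!Suc k) = snd (ps!k)" using lt True j unfolding left_turn_def vert_def by auto
    have V: "vstep A (ps!k) (ps!Suc k)" using step_v[OF p True vout] .
    define y where "y = (fst (ps!Suc k), snd (ps!j))"
    have yT: "y \<in> T A" using pT[OF Suc_lessD[OF jl]] pT[of "Suc k"] V H True unfolding y_def T_def vstep_def hstep_def by auto
    have s1: "vstep A (ps!(k-1)) y" using V H hin j unfolding y_def hstep_def vstep_def by auto
    have s2: "hstep A y (ps!Suc k)" using V H vout j unfolding y_def hstep_def vstep_def by auto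
    have qp: "is_path A (ps[k := y])" using replace_path[OF p k0 k yT] s1 s2 True by auto
    have ne: "y \<noteq> ps!k"
    proof
      assume "y = ps!k" then have "snd y = snd (ps!k)" by simp
      then show False using H unfolding y_def hstep_def by simp
    qed
    have "path_less ps (ps[k := y])" unfolding path_less_def
      using k0 k ne hin j by (intro exI[of _ k]) (auto simp: y_def take_update_cancel)
    then show ?thesis using qp replace_set[OF k path_distinct[OF p]] by blast
  next
    case False
    then have kl: "Suc k = length ps" using k by simp
    have dgk: "fst (ps!k) = snd (ps!k)" using path_last[OF p] kl by (metis diff_Suc_1)
    define y where "y = (snd (ps!j), snd (ps!j))"
    have yT: "y \<in> T A" using pT[of j] jl unfolding y_def T_def by auto
    have s1: "vstep A (ps!(k-1)) y" using H hin dgk j pT[of j] jl unfolding y_def hstep_def vstep_def by auto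
    have qp: "is_path A (ps[k := y])" using replace_path[OF p k0 k yT] s1 kl by (auto simp: y_def)
    have ne: "y \<noteq> ps!k"
    proof
      assume "y = ps!k" then have "snd y = snd (ps!k)" by simp
      then show False using H unfolding y_def hstep_def by simp
    qed
    have "path_less ps (ps[k := y])" unfolding path_less_def
      using k0 k ne hin j by (intro exI[of _ k]) (auto simp: y_def take_update_cancel)
    then show ?thesis using qp replace_set[OF k path_distinct[OF p]] by blast
  qed
qed

lemma hstep_sub: "hstep A p q \<Longrightarrow> snd q \<in> A' \<Longrightarrow> A' \<subseteq> A \<Longrightarrow> hstep A' p q"
  unfolding hstep_def by blast

lemma vstep_sub: "vstep A p q \<Longrightarrow> fst q \<in> A' \<Longrightarrow> A' \<subseteq> A \<Longrightarrow> vstep A' p q"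
  unfolding vstep_def by blast

lemma hstep_ins: "hstep A p q \<Longrightarrow> \<not> (snd q < c \<and> c < snd p) \<Longrightarrow> hstep (insert c A) p q"
  unfolding hstep_def by auto

lemma vstep_ins: "vstep A p q \<Longrightarrow> \<not> (fst p < c \<and> c < fst q) \<Longrightarrow> vstep (insert c A) p q"
  unfolding vstep_def by auto

definition rem :: "nat \<Rightarrow> 'a list \<Rightarrow> 'a list" where "rem k ps = take k ps @ drop (Suc k) ps"

lemma rem_length: "k < length ps \<Longrightarrow> length (rem k ps) = length ps - 1"
  unfolding rem_def by simp

lemma rem_nth: "k < length ps \<Longrightarrow> i < length ps - 1 \<Longrightarrow> rem k ps ! i = (if i < k then ps!i else ps!Suc i)"
  unfolding rem_def by (auto simp: nth_append min_def)

lemma rem_set: "k < length ps \<Longrightarrow> set ps - {ps!k} \<subseteq> set (rem k ps)"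
proof
  fix x assume k: "k < length ps" and x: "x \<in> set ps - {ps!k}"
  then obtain i where i: "i < length ps" "x = ps!i" "i \<noteq> k" by (auto simp: in_set_conv_nth)
  show "x \<in> set (rem k ps)"
  proof (cases "i < k")
    case True
    then have "rem k ps ! i = x" using rem_nth[OF k, of i] i k by auto
    moreover have "i < length (rem k ps)" using rem_length[OF k] True k by linarith
    ultimately show ?thesis by (metis nth_mem)
  next
    case False
    then have "k < i" using i(3) by linarith
    define i' where "i' = i - 1"
    have i': "i = Suc i'" "k \<le> i'" using \<open>k < i\<close> unfolding i'_def by auto
    then have "rem k ps ! i' = x" using rem_nth[OF k, of i'] i by auto
    moreover have "i' < length (rem k ps)" using rem_length[OF k] i i' by auto
    ultimately show ?thesis by (metis nth_mem)
  qed
qed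

lemma remove_path:
  assumes p: "is_path A ps" and kl: "Suc k < length ps" and sub: "A' \<subseteq> A"
    and hd0: "rem k ps ! 0 = (Min A', Max A')"
    and TT: "\<And>i. i < length ps \<Longrightarrow> i \<noteq> k \<Longrightarrow> fst (ps!i) \<in> A' \<and> snd (ps!i) \<in> A'"
    and join: "0 < k \<Longrightarrow> hstep A' (ps!(k-1)) (ps!Suc k) \<or> vstep A' (ps!(k-1)) (ps!Suc k)"
  shows "is_path A' (rem k ps)"
proof -
  let ?r = "rem k ps"
  have k: "k < length ps" using kl by simp
  have len: "length ?r = length ps - 1" using rem_length[OF k] .
  have ne: "?r \<noteq> []" using len kl by auto
  have hd: "hd ?r = (Min A', Max A')" using ne hd0 by (simp add: hd_conv_nth)
  define i0 where "i0 = length ?r - 1"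
  have i0: "\<not> i0 < k" "Suc i0 = length ps - 1" "i0 < length ps - 1" using kl len unfolding i0_def by auto
  have "last ?r = ?r ! i0" using ne unfolding i0_def by (simp add: last_conv_nth)
  also have "\<dots> = ps ! (length ps - 1)" using rem_nth[OF k i0(3)] i0(1,2) by simp
  finally have lst: "fst (last ?r) = snd (last ?r)" using path_last[OF p] by simp
  have rT: "\<And>i. i < length ?r \<Longrightarrow> \<exists>i'. i' < length ps \<and> i' \<noteq> k \<and> ?r ! i = ps ! i'"
  proof -
    fix i assume i: "i < length ?r"
    show "\<exists>i'. i' < length ps \<and> i' \<noteq> k \<and> ?r ! i = ps ! i'"
    proof (cases "i < k")
      case True then show ?thesis using rem_nth[OF k, of i] i len by (intro exI[of _ i]) auto
    next
      case False then show ?thesis using rem_nth[OF k, of i] i len by (intro exI[of _ "Suc i"]) auto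
    qed
  qed
  have st: "set ?r \<subseteq> T A'"
  proof
    fix x assume "x \<in> set ?r"
    then obtain i where i: "i < length ?r" "x = ?r ! i" by (auto simp: in_set_conv_nth)
    then obtain i' where i': "i' < length ps" "i' \<noteq> k" "x = ps ! i'" using rT by blast
    then show "x \<in> T A'" using TT[OF i'(1,2)] path_T[OF p i'(1)] unfolding T_def by (cases x) auto
  qed
  have lift: "hstep A' (ps!i) (ps!Suc i) \<or> vstep A' (ps!i) (ps!Suc i)" if i: "Suc i < length ps" "Suc i \<noteq> k" for i
  proof -
    have c: "fst (ps!Suc i) \<in> A'" "snd (ps!Suc i) \<in> A'" using TT[OF i] by auto
    show ?thesis using is_pathD(5)[OF p i(1)] hstep_sub[OF _ c(2) sub] vstep_sub[OF _ c(1) sub] by blast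
  qed
  have steps: "\<forall>i. Suc i < length ?r \<longrightarrow> hstep A' (?r ! i) (?r ! Suc i) \<or> vstep A' (?r ! i) (?r ! Suc i)"
  proof (intro allI impI)
    fix i assume i: "Suc i < length ?r"
    consider "Suc i < k" | "Suc i = k" | "k \<le> i" by linarith
    then show "hstep A' (?r ! i) (?r ! Suc i) \<or> vstep A' (?r ! i) (?r ! Suc i)"
    proof cases
      case 1
      have ii: "i < length ps - 1" "Suc i < length ps - 1" using i len by auto
      have "?r ! i = ps ! i" "?r ! Suc i = ps ! Suc i" using rem_nth[OF k ii(1)] rem_nth[OF k ii(2)] 1 by auto
      moreover have "hstep A' (ps!i) (ps!Suc i) \<or> vstep A' (ps!i) (ps!Suc i)" using lift[of i] 1 kl by linarith
      ultimately show ?thesis by simp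
    next
      case 2
      have ii: "i < length ps - 1" "Suc i < length ps - 1" using i len by auto
      have "?r ! i = ps ! (k-1)" "?r ! Suc i = ps ! Suc k" using rem_nth[OF k ii(1)] rem_nth[OF k ii(2)] 2 by auto
      moreover have "0 < k" using 2 by simp
      ultimately show ?thesis using join by simp
    next
      case 3
      have ii: "i < length ps - 1" "Suc i < length ps - 1" using i len by auto
      have "?r ! i = ps ! Suc i" "?r ! Suc i = ps ! Suc (Suc i)" using rem_nth[OF k ii(1)] rem_nth[OF k ii(2)] 3 by auto
      moreover have "hstep A' (ps!Suc i) (ps!Suc (Suc i)) \<or> vstep A' (ps!Suc i) (ps!Suc (Suc i))"
        using lift[of "Suc i"] 3 ii by linarith
      ultimately show ?thesis by simp
    qed
  qed
  show ?thesis unfolding is_path_def using ne hd lst st steps by blast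
qed

definition ins :: "nat \<Rightarrow> 'a \<Rightarrow> 'a list \<Rightarrow> 'a list" where "ins j y P = take j P @ y # drop j P"

lemma ins_length: "j \<le> length P \<Longrightarrow> length (ins j y P) = Suc (length P)"
  unfolding ins_def by simp

lemma ins_nth: "j \<le> length P \<Longrightarrow> ins j y P ! i = (if i < j then P!i else if i = j then y else P!(i-1))"
proof -
  assume j: "j \<le> length P"
  have lt: "length (take j P) = j" using j by simp
  consider "i < j" | "i = j" | "j < i" by linarith
  then show ?thesis
  proof cases
    case 1 then show ?thesis unfolding ins_def using lt by (simp add: nth_append)
  next
    case 2 then show ?thesis unfolding ins_def using lt by (simp add: nth_append)
  next
    case 3
    obtain d where "i = Suc (j + d)" using less_imp_Suc_add[OF 3] by blast
    then have d: "i = j + Suc d" by simp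
    have "ins j y P ! i = (y # drop j P) ! Suc d" unfolding ins_def using lt d by (simp add: nth_append)
    also have "\<dots> = P ! (j + d)" using j by simp
    finally show ?thesis using d by simp
  qed
qed

lemma ins_set: "set (ins j y P) = insert y (set P)"
proof -
  have "set (take j P) \<union> set (drop j P) = set P" by (metis append_take_drop_id set_append)
  then show ?thesis unfolding ins_def by auto
qed

lemma T_mono: "A' \<subseteq> B \<Longrightarrow> T A' \<subseteq> T B"
  unfolding T_def by auto

lemma insert_path:
  assumes P: "is_path A' P" and j: "j < length P" and sub: "A' \<subseteq> B"
    and hd0: "(if j = 0 then y else P!0) = (Min B, Max B)"
    and yT: "y \<in> T B"
    and s1: "0 < j \<Longrightarrow> hstep B (P!(j-1)) y \<or> vstep B (P!(j-1)) y"
    and s2: "hstep B y (P!j) \<or> vstep B y (P!j)"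
    and oth: "\<And>i. Suc i < length P \<Longrightarrow> Suc i \<noteq> j \<Longrightarrow> hstep B (P!i) (P!Suc i) \<or> vstep B (P!i) (P!Suc i)"
  shows "is_path B (ins j y P) \<and> set P \<subseteq> set (ins j y P)"
proof -
  let ?q = "ins j y P"
  have jl: "j \<le> length P" using j by simp
  have len: "length ?q = Suc (length P)" using ins_length[OF jl] .
  have ne: "?q \<noteq> []" using len by auto
  have hd: "hd ?q = (Min B, Max B)" using ne hd0 ins_nth[OF jl, of y 0] by (simp add: hd_conv_nth split: if_splits)
  have "last ?q = ?q ! length P" using ne len by (simp add: last_conv_nth)
  also have "\<dots> = P ! (length P - 1)" using ins_nth[OF jl, of y "length P"] j by auto
  finally have lst: "fst (last ?q) = snd (last ?q)" using path_last[OF P] by simp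
  have qs: "set ?q = insert y (set P)" by (rule ins_set)
  have "set P \<subseteq> T B" using is_pathD(4)[OF P] T_mono[OF sub] by (rule order_trans)
  then have st: "set ?q \<subseteq> T B" using qs yT by simp
  have steps: "\<forall>i. Suc i < length ?q \<longrightarrow> hstep B (?q ! i) (?q ! Suc i) \<or> vstep B (?q ! i) (?q ! Suc i)"
  proof (intro allI impI)
    fix i assume i: "Suc i < length ?q"
    consider "Suc i < j" | "Suc i = j" | "i = j" | "j < i" by linarith
    then show "hstep B (?q ! i) (?q ! Suc i) \<or> vstep B (?q ! i) (?q ! Suc i)"
    proof cases
      case 1
      then have "?q ! i = P ! i" "?q ! Suc i = P ! Suc i" using ins_nth[OF jl] by auto
      then show ?thesis using oth[of i] 1 j by auto
    next
      case 2
      then have "?q ! i = P ! (j-1)" "?q ! Suc i = y" using ins_nth[OF jl] by auto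
      then show ?thesis using s1 2 by auto
    next
      case 3
      then have "?q ! i = y" "?q ! Suc i = P ! j" using ins_nth[OF jl] by auto
      then show ?thesis using s2 by auto
    next
      case 4
      define i' where "i' = i - 1"
      have i': "i = Suc i'" "j \<le> i'" using 4 unfolding i'_def by auto
      then have "?q ! i = P ! i'" "?q ! Suc i = P ! Suc i'" using ins_nth[OF jl] 4 by auto
      then show ?thesis using oth[of i'] i' i len by auto
    qed
  qed
  have "is_path B ?q" unfolding is_path_def by (intro conjI ne hd lst st steps)
  moreover have "set P \<subseteq> set ?q" using qs by blast
  ultimately show ?thesis by blast
qed

lemma insert_index:
  assumes fin: "finite A'" and P: "is_path A' P" and c: "c \<notin> A'"
  shows "\<exists>Q. is_path (insert c A') Q \<and> set P \<subseteq> set Q"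
proof -
  let ?B = "insert c A'"
  define L where "L = length P"
  define d where "d = fst (P!(L-1))"
  have Lpos: "0 < L" using is_pathD(1)[OF P] L_def by auto
  have LL: "L - 1 < length P" using Lpos L_def by simp
  have dA: "d \<in> A'" using path_T[OF P LL] d_def by auto
  have dd: "snd (P!(L-1)) = d" using path_last[OF P] d_def L_def by simp
  have TB: "\<And>i. i < L \<Longrightarrow> fst (P!i) \<in> A' \<and> snd (P!i) \<in> A' \<and> fst (P!i) \<le> snd (P!i)"
    using path_T[OF P] L_def by auto
  have fle: "\<And>i. i < L \<Longrightarrow> fst (P!i) \<le> d"
    using path_mono[OF P, of _ "L-1"] d_def L_def LL by auto
  have sge: "\<And>i. i < L \<Longrightarrow> d \<le> snd (P!i)"
    using path_mono[OF P, of _ "L-1"] dd L_def LL by fastforce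
  have ne: "A' \<noteq> {}" using dA by auto
  have mn: "Min A' \<le> d" "d \<le> Max A'" using fin dA by auto
  have Amin: "\<And>a. a \<in> A' \<Longrightarrow> Min A' \<le> a" and Amax: "\<And>a. a \<in> A' \<Longrightarrow> a \<le> Max A'" using fin by auto
  have P0: "P!0 = (Min A', Max A')" using path_0[OF P] .
  have cd: "c \<noteq> d" using c dA by auto
  have MinB: "Min ?B = min c (Min A')" using fin ne by simp
  have MaxB: "Max ?B = max c (Max A')" using fin ne by simp
  have stepP: "\<And>i. Suc i < L \<Longrightarrow> hstep A' (P!i) (P!Suc i) \<or> vstep A' (P!i) (P!Suc i)"
    using is_pathD(5)[OF P] L_def by auto
  have Asub: "A' \<subseteq> ?B" by auto
  have MM: "Min A' \<in> A'" "Max A' \<in> A'" using fin ne by auto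
  then have cmin: "c \<noteq> Min A'" "c \<noteq> Max A'" using c by auto
  have Lj: "0 < length P" using Lpos L_def by simp
  consider (r1) "c < d" "c < Min A'" | (r2) "c < d" "Min A' < c" | (c1) "d < c" "Max A' < c"
    | (c2) "d < c" "c < Max A'" using cd cmin by linarith
  then show ?thesis
  proof cases
    case r1
    define y where "y = (c, Max A')"
    have hd0: "(if (0::nat) = 0 then y else P!0) = (Min ?B, Max ?B)" using MinB MaxB r1 mn unfolding y_def by auto
    have yT: "y \<in> T ?B" unfolding y_def T_def using r1 mn MM by auto
    have s2: "hstep ?B y (P!0) \<or> vstep ?B y (P!0)"
    proof -
      have "vstep ?B y (P!0)" unfolding vstep_def y_def P0 using r1 MM by (auto dest: Amin)
      then show ?thesis by blast
    qed
    have oth: "hstep ?B (P!i) (P!Suc i) \<or> vstep ?B (P!i) (P!Suc i)" if i: "Suc i < length P" "Suc i \<noteq> 0" for i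
    proof -
      have "\<not> (snd (P!Suc i) < c \<and> c < snd (P!i))" using sge[of "Suc i"] i r1 L_def by auto
      moreover have "\<not> (fst (P!i) < c \<and> c < fst (P!Suc i))" using TB[of i] Amin i r1 L_def by fastforce
      ultimately show ?thesis using stepP[of i] i L_def hstep_ins vstep_ins by blast
    qed
    show ?thesis using insert_path[OF P Lj Asub hd0 yT _ s2 oth] by blast
  next
    case r2
    define K where "K = {i. i < L \<and> fst (P!i) < c}"
    have K0: "0 \<in> K" using P0 r2 Lpos K_def by auto
    have Kfin: "finite K" unfolding K_def by auto
    define k where "k = Max K"
    have kK: "k \<in> K" using Max_in Kfin K0 k_def by blast
    have kmax: "\<And>i. i \<in> K \<Longrightarrow> i \<le> k" using Kfin k_def by auto
    have fk: "fst (P!k) < c" "k < L" using kK K_def by auto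
    have kl: "Suc k < L"
    proof (rule ccontr)
      assume "\<not> Suc k < L"
      then have "k = L - 1" using fk by simp
      then show False using fk d_def r2 by simp
    qed
    have f1: "c < fst (P!Suc k)"
    proof -
      have "Suc k \<notin> K" using kmax by fastforce
      then have "c \<le> fst (P!Suc k)" using kl K_def by auto
      moreover have "fst (P!Suc k) \<noteq> c" using TB[OF kl] c by auto
      ultimately show ?thesis by simp
    qed
    have V: "vstep A' (P!k) (P!Suc k)" using stepP[OF kl] fk f1 unfolding hstep_def by auto
    define y where "y = (c, snd (P!k))"
    have j: "Suc k < length P" using kl L_def by simp
    have hd0: "(if Suc k = 0 then y else P!0) = (Min ?B, Max ?B)" using MinB MaxB r2 mn P0 by auto
    have yT: "y \<in> T ?B" unfolding y_def T_def using TB[OF kl] TB[of k] fk f1 V unfolding vstep_def by auto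
    have s1: "hstep ?B (P!(Suc k - 1)) y \<or> vstep ?B (P!(Suc k - 1)) y"
    proof -
      have "vstep ?B (P!k) y" unfolding vstep_def y_def using fk f1 V unfolding vstep_def by auto
      then show ?thesis by simp
    qed
    have s2: "hstep ?B y (P!Suc k) \<or> vstep ?B y (P!Suc k)"
    proof -
      have "vstep ?B y (P!Suc k)" unfolding vstep_def y_def using fk f1 V TB[OF kl] unfolding vstep_def by auto
      then show ?thesis by blast
    qed
    have oth: "hstep ?B (P!i) (P!Suc i) \<or> vstep ?B (P!i) (P!Suc i)" if i: "Suc i < length P" "Suc i \<noteq> Suc k" for i
    proof -
      have iL: "Suc i < L" using i L_def by simp
      have "\<not> (snd (P!Suc i) < c \<and> c < snd (P!i))" using sge[OF iL] r2 by auto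
      moreover have "\<not> (fst (P!i) < c \<and> c < fst (P!Suc i))"
      proof (cases "i < k")
        case True
        then have "fst (P!Suc i) \<le> fst (P!k)" using path_mono[OF P, of "Suc i" k] fk L_def by auto
        then show ?thesis using fk by auto
      next
        case False
        then have "Suc k \<le> i" using i by auto
        then have "fst (P!Suc k) \<le> fst (P!i)" using path_mono[OF P, of "Suc k" i] iL L_def by auto
        then show ?thesis using f1 by auto
      qed
      ultimately show ?thesis using stepP[OF iL] hstep_ins vstep_ins by blast
    qed
    show ?thesis using insert_path[OF P j Asub hd0 yT s1 s2 oth] by blast
  next
    case c1
    define y where "y = (Min A', c)"
    have hd0: "(if (0::nat) = 0 then y else P!0) = (Min ?B, Max ?B)" using MinB MaxB c1 mn unfolding y_def by auto
    have yT: "y \<in> T ?B" unfolding y_def T_def using c1 mn MM by auto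
    have s2: "hstep ?B y (P!0) \<or> vstep ?B y (P!0)"
    proof -
      have "hstep ?B y (P!0)" unfolding hstep_def y_def P0 using c1 MM by (auto dest: Amax)
      then show ?thesis by blast
    qed
    have oth: "hstep ?B (P!i) (P!Suc i) \<or> vstep ?B (P!i) (P!Suc i)" if i: "Suc i < length P" "Suc i \<noteq> 0" for i
    proof -
      have "\<not> (snd (P!Suc i) < c \<and> c < snd (P!i))" using TB[of i] Amax i c1 L_def by fastforce
      moreover have "\<not> (fst (P!i) < c \<and> c < fst (P!Suc i))" using fle[of "Suc i"] i c1 L_def by auto
      ultimately show ?thesis using stepP[of i] i L_def hstep_ins vstep_ins by blast
    qed
    show ?thesis using insert_path[OF P Lj Asub hd0 yT _ s2 oth] by blast
  next
    case c2
    define K where "K = {i. i < L \<and> c < snd (P!i)}"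
    have K0: "0 \<in> K" using P0 c2 Lpos K_def by auto
    have Kfin: "finite K" unfolding K_def by auto
    define k where "k = Max K"
    have kK: "k \<in> K" using Max_in Kfin K0 k_def by blast
    have kmax: "\<And>i. i \<in> K \<Longrightarrow> i \<le> k" using Kfin k_def by auto
    have sk: "c < snd (P!k)" "k < L" using kK K_def by auto
    have kl: "Suc k < L"
    proof (rule ccontr)
      assume "\<not> Suc k < L"
      then have "k = L - 1" using sk by simp
      then show False using sk dd c2 by simp
    qed
    have s1': "snd (P!Suc k) < c"
    proof -
      have "Suc k \<notin> K" using kmax by fastforce
      then have "snd (P!Suc k) \<le> c" using kl K_def by auto
      moreover have "snd (P!Suc k) \<noteq> c" using TB[OF kl] c by auto
      ultimately show ?thesis by simp
    qed
    have H: "hstep A' (P!k) (P!Suc k)" using stepP[OF kl] sk s1' unfolding vstep_def by auto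
    define y where "y = (fst (P!k), c)"
    have j: "Suc k < length P" using kl L_def by simp
    have hd0: "(if Suc k = 0 then y else P!0) = (Min ?B, Max ?B)" using MinB MaxB c2 mn P0 by auto
    have yT: "y \<in> T ?B" unfolding y_def T_def using TB[OF kl] TB[of k] sk s1' H unfolding hstep_def by auto
    have s1: "hstep ?B (P!(Suc k - 1)) y \<or> vstep ?B (P!(Suc k - 1)) y"
    proof -
      have "hstep ?B (P!k) y" unfolding hstep_def y_def using sk s1' H unfolding hstep_def by auto
      then show ?thesis by simp
    qed
    have s2: "hstep ?B y (P!Suc k) \<or> vstep ?B y (P!Suc k)"
    proof -
      have "hstep ?B y (P!Suc k)" unfolding hstep_def y_def using sk s1' H TB[OF kl] unfolding hstep_def by auto
      then show ?thesis by blast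
    qed
    have oth: "hstep ?B (P!i) (P!Suc i) \<or> vstep ?B (P!i) (P!Suc i)" if i: "Suc i < length P" "Suc i \<noteq> Suc k" for i
    proof -
      have iL: "Suc i < L" using i L_def by simp
      have "\<not> (fst (P!i) < c \<and> c < fst (P!Suc i))" using fle[OF iL] c2 by auto
      moreover have "\<not> (snd (P!Suc i) < c \<and> c < snd (P!i))"
      proof (cases "i < k")
        case True
        then have "snd (P!k) \<le> snd (P!Suc i)" using path_mono[OF P, of "Suc i" k] sk L_def by auto
        then show ?thesis using sk by auto
      next
        case False
        then have "Suc k \<le> i" using i by auto
        then have "snd (P!i) \<le> snd (P!Suc k)" using path_mono[OF P, of "Suc k" i] iL L_def by auto
        then show ?thesis using s1' by auto
      qed
      ultimately show ?thesis using stepP[OF iL] hstep_ins vstep_ins by blast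
    qed
    show ?thesis using insert_path[OF P j Asub hd0 yT s1 s2 oth] by blast
  qed
qed

lemma remove_iso:
  assumes fin: "finite A" and p: "is_path A ps" and k: "k < length ps" and iso: "isolated ps k"
    and ix: "is_index ps k c" and l2: "2 \<le> length ps"
  shows "is_path (A - {c}) (rem k ps)"
proof -
  have nl: "\<not> left_turn ps k" "\<not> right_turn ps k" using iso unfolding isolated_def by auto
  have kl: "Suc k < length ps"
  proof (rule ccontr)
    assume "\<not> Suc k < length ps"
    then have kk: "k = length ps - 1" "0 < k" using k l2 by auto
    then obtain j where j: "k = Suc j" using gr0_conv_Suc by blast
    have "Suc j < length ps" using j k by simp
    then have "fst (ps!Suc j) = fst (ps!j) \<or> snd (ps!Suc j) = snd (ps!j)" using step_or[OF p] by blast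
    then have "fst (ps!(k-1)) = fst (ps!k) \<or> snd (ps!(k-1)) = snd (ps!k)" using j by auto
    then have "left_turn ps k \<or> right_turn ps k"
      unfolding left_turn_def right_turn_def horiz_def vert_def using kk(1) l2 by blast
    then show False using nl by blast
  qed
  have oth: "\<And>l. l < length ps \<Longrightarrow> l \<noteq> k \<Longrightarrow> fst (ps!l) \<noteq> c \<and> snd (ps!l) \<noteq> c"
    using ix unfolding is_index_def by blast
  have cin: "c = fst (ps!k) \<or> c = snd (ps!k)" using ix unfolding is_index_def by auto
  have TT: "\<And>i. i < length ps \<Longrightarrow> i \<noteq> k \<Longrightarrow> fst (ps!i) \<in> A - {c} \<and> snd (ps!i) \<in> A - {c}"
    using path_T[OF p] oth by blast
  have sub: "A - {c} \<subseteq> A" by blast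
  have finc: "finite (A - {c})" using fin by simp
  have Amin: "\<And>a. a \<in> A \<Longrightarrow> Min A \<le> a" and Amax: "\<And>a. a \<in> A \<Longrightarrow> a \<le> Max A" using fin by auto
  have P0: "ps!0 = (Min A, Max A)" using path_0[OF p] .
  have hd0: "rem k ps ! 0 = (Min (A - {c}), Max (A - {c}))"
  proof (cases k)
    case 0
    have r0: "rem k ps ! 0 = ps ! 1" using rem_nth[OF k, of 0] 0 l2 by auto
    have l1: "Suc 0 < length ps" using l2 by simp
    have T1: "fst (ps!1) \<in> A - {c}" "snd (ps!1) \<in> A - {c}" using TT[of 1] l1 0 by auto
    from step_cases[OF p l1, case_names H V] show ?thesis
    proof cases
      case H
      have "fst (ps!0) \<noteq> c" using H T1 by auto
      then have cM: "c = Max A" using cin 0 P0 by auto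
      have "Min (A - {c}) = fst (ps!1)"
        by (rule Min_eqI[OF finc]) (use H P0 T1 Amin in auto)
      moreover have "Max (A - {c}) = snd (ps!1)"
      proof (rule Max_eqI[OF finc])
        fix y assume y: "y \<in> A - {c}"
        then have "y < snd (ps!0)" using Amax[of y] cM P0 by fastforce
        then show "y \<le> snd (ps!1)" using H(3) y unfolding One_nat_def by (meson DiffD1 not_le_imp_less)
      qed (use T1 in auto)
      ultimately show ?thesis using r0 by (simp add: prod_eq_iff)
    next
      case V
      have "snd (ps!0) \<noteq> c" using V T1 by auto
      then have cM: "c = Min A" using cin 0 P0 by auto
      have "Max (A - {c}) = snd (ps!1)"
        by (rule Max_eqI[OF finc]) (use V P0 T1 Amax in auto)
      moreover have "Min (A - {c}) = fst (ps!1)"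
      proof (rule Min_eqI[OF finc])
        fix y assume y: "y \<in> A - {c}"
        then have "fst (ps!0) < y" using Amin[of y] cM P0 by fastforce
        then show "fst (ps!1) \<le> y" using V(3) y unfolding One_nat_def by (meson DiffD1 not_le_imp_less)
      qed (use T1 in auto)
      ultimately show ?thesis using r0 by (simp add: prod_eq_iff)
    qed
  next
    case (Suc j)
    have r0: "rem k ps ! 0 = ps ! 0" using rem_nth[OF k, of 0] Suc l2 by auto
    have l0: "0 < length ps" using l2 by linarith
    have T0: "Min A \<in> A - {c}" "Max A \<in> A - {c}" using TT[OF l0] Suc P0 by auto
    have "Min (A - {c}) = Min A" by (rule Min_eqI[OF finc]) (use T0 Amin in auto)
    moreover have "Max (A - {c}) = Max A" by (rule Max_eqI[OF finc]) (use T0 Amax in auto)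
    ultimately show ?thesis using r0 P0 by simp
  qed
  have join: "hstep (A - {c}) (ps!(k-1)) (ps!Suc k) \<or> vstep (A - {c}) (ps!(k-1)) (ps!Suc k)" if k0: "0 < k"
  proof -
    obtain j where j: "k = Suc j" using k0 gr0_conv_Suc by blast
    have jl: "Suc j < length ps" using j k by simp
    have a: "fst (ps!k) = fst (ps!j) \<or> snd (ps!k) = snd (ps!j)" using step_or[OF p jl] j by simp
    have b: "fst (ps!Suc k) = fst (ps!k) \<or> snd (ps!Suc k) = snd (ps!k)" using step_or[OF p kl] .
    have c1: "\<not> (fst (ps!j) = fst (ps!k) \<and> snd (ps!k) = snd (ps!Suc k))"
      using nl(1) kl j unfolding left_turn_def horiz_def vert_def by auto
    have c2: "\<not> (snd (ps!j) = snd (ps!k) \<and> fst (ps!k) = fst (ps!Suc k))"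
      using nl(2) kl j unfolding right_turn_def horiz_def vert_def by auto
    have T2: "fst (ps!Suc k) \<in> A - {c}" "snd (ps!Suc k) \<in> A - {c}" using TT[OF kl] by auto
    from a show ?thesis
    proof
      assume hin: "fst (ps!k) = fst (ps!j)"
      then have hout: "fst (ps!Suc k) = fst (ps!k)" using b c1 by auto
      have H1: "hstep A (ps!j) (ps!k)" using step_h[OF p jl] hin j by simp
      have H2: "hstep A (ps!k) (ps!Suc k)" using step_h[OF p kl hout] .
      have "fst (ps!j) \<noteq> c" using oth[of j] jl j by auto
      then have cs: "c = snd (ps!k)" using cin hin by auto
      have "hstep (A - {c}) (ps!j) (ps!Suc k)"
        unfolding hstep_def using H1 H2 T2 hin hout cs unfolding hstep_def
        by (metis DiffD1 DiffD2 insertI1 linorder_neqE_nat order.strict_trans)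
      then show ?thesis using j by simp
    next
      assume vin: "snd (ps!k) = snd (ps!j)"
      then have vout: "snd (ps!Suc k) = snd (ps!k)" using b c2 by auto
      have V1: "vstep A (ps!j) (ps!k)" using step_v[OF p jl] vin j by simp
      have V2: "vstep A (ps!k) (ps!Suc k)" using step_v[OF p kl vout] .
      have "snd (ps!j) \<noteq> c" using oth[of j] jl j by auto
      then have cs: "c = fst (ps!k)" using cin vin by auto
      have "vstep (A - {c}) (ps!j) (ps!Suc k)"
        unfolding vstep_def using V1 V2 T2 vin vout cs unfolding vstep_def
        by (metis DiffD1 DiffD2 insertI1 linorder_neqE_nat order.strict_trans)
      then show ?thesis using j by simp
    qed
  qed
  show ?thesis using remove_path[OF p kl sub hd0 TT join] by blast
qed

lemma iso_swap:
  assumes n: "n = 2 * m" and A: "A \<in> AA n" and p: "is_path A ps" and k: "k < length ps"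
    and iso: "isolated ps k" and ix: "is_index ps k c"
  shows "\<exists>qs. is_path (insert (n + 1 - c) (A - {c})) qs \<and> set ps - {ps!k} \<subseteq> set qs"
proof -
  have fin: "finite A" using AA_finite[OF A] .
  have cA: "c \<in> A" using ix path_T[OF p k] unfolding is_index_def by auto
  have c1: "1 \<le> c" "c \<le> n" using AA_sub[OF A cA] by auto
  have nc: "n + 1 - c \<notin> A" using AA_compl[OF A cA, of "n + 1 - c"] c1 by auto
  show ?thesis
  proof (cases "length ps = 1")
    case True
    then have k0: "k = 0" using k by simp
    have "fst (ps!0) = snd (ps!0)" using path_last[OF p] True by simp
    then have MM: "Min A = Max A" using path_0[OF p] by simp
    have "A \<subseteq> {Min A}"
    proof
      fix a assume "a \<in> A"
      then have "Min A \<le> a" "a \<le> Max A" using fin by auto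
      then show "a \<in> {Min A}" using MM by simp
    qed
    then have e: "A - {c} = {}" using cA by blast
    have B: "insert (n + 1 - c) (A - {c}) = {n + 1 - c}" by (subst e) (rule refl)
    have "is_path {n + 1 - c} [(n + 1 - c, n + 1 - c)]" unfolding is_path_def T_def by auto
    then have "is_path (insert (n + 1 - c) (A - {c})) [(n + 1 - c, n + 1 - c)]" unfolding B .
    moreover have "set ps - {ps!k} = {}" using True k0 by (metis Diff_cancel length_0_conv length_Suc_conv nth_Cons_0 set_simps(1) set_simps(2) One_nat_def)
    ultimately show ?thesis by blast
  next
    case False
    then have l2: "2 \<le> length ps" using k by auto
    have P: "is_path (A - {c}) (rem k ps)" using remove_iso[OF fin p k iso ix l2] .
    obtain Q where Q: "is_path (insert (n + 1 - c) (A - {c})) Q" "set (rem k ps) \<subseteq> set Q"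
      using insert_index[OF _ P, of "n + 1 - c"] fin nc by auto
    then show ?thesis using rem_set[OF k] by blast
  qed
qed

lemma M2:
  assumes n: "n = 2 * m" and A: "A \<in> AA n" and p: "is_path A ps" and x: "x \<in> minus_list m ps"
  shows "\<exists>B qs. B \<in> AA n \<and> is_path B qs \<and> set ps - {x} \<subseteq> set qs \<and> (lex_less B A \<or> (B = A \<and> path_less qs ps))"
proof -
  obtain k where k: "k < length ps" "x = ps!k"
    "right_turn ps k \<or> (isolated ps k \<and> (\<exists>c. is_index ps k c \<and> c > m))"
    using x unfolding minus_list_def by blast
  from k(3) show ?thesis
  proof
    assume "right_turn ps k"
    then show ?thesis using flip_right[OF p k(1)] A k(2) by blast
  next
    assume "isolated ps k \<and> (\<exists>c. is_index ps k c \<and> c > m)"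
    then obtain c where c: "isolated ps k" "is_index ps k c" "m < c" by blast
    have cA: "c \<in> A" using c(2) path_T[OF p k(1)] unfolding is_index_def by auto
    obtain qs where qs: "is_path (insert (n + 1 - c) (A - {c})) qs" "set ps - {ps!k} \<subseteq> set qs"
      using iso_swap[OF n A p k(1) c(1,2)] by blast
    have "insert (n + 1 - c) (A - {c}) \<in> AA n" using swap_AA[OF n A cA] .
    moreover have "lex_less (insert (n + 1 - c) (A - {c})) A" using swap_lex(1)[OF n A cA c(3)] .
    ultimately show ?thesis using qs k(2) by blast
  qed
qed

lemma P2:
  assumes n: "n = 2 * m" and A: "A \<in> AA n" and p: "is_path A ps" and x: "x \<in> set ps - minus_list m ps"
  shows "\<exists>B qs. B \<in> AA n \<and> is_path B qs \<and> set ps - {x} \<subseteq> set qs \<and> (lex_less A B \<or> (B = A \<and> path_less ps qs))"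
proof -
  obtain k where k: "k < length ps" "x = ps!k" using x by (auto simp: in_set_conv_nth)
  have nm: "ps!k \<notin> minus_list m ps" using x k by simp
  have nr: "\<not> right_turn ps k" using nm inminus[OF k(1)] by blast
  show ?thesis
  proof (cases "left_turn ps k")
    case True
    then show ?thesis using flip_left[OF p k(1)] A k(2) by blast
  next
    case False
    then have iso: "isolated ps k" unfolding isolated_def using nr k by blast
    obtain c where c: "is_index ps k c" using T3[OF p iso] by blast
    have cm: "c \<le> m" using nm inminus[OF k(1)] iso c by (meson not_le)
    have cA: "c \<in> A" using c path_T[OF p k(1)] unfolding is_index_def by auto
    obtain qs where qs: "is_path (insert (n + 1 - c) (A - {c})) qs" "set ps - {ps!k} \<subseteq> set qs"
      using iso_swap[OF n A p k(1) iso c] by blast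
    have "insert (n + 1 - c) (A - {c}) \<in> AA n" using swap_AA[OF n A cA] .
    moreover have "lex_less A (insert (n + 1 - c) (A - {c}))" using swap_lex(2)[OF n A cA cm] .
    ultimately show ?thesis using qs k(2) by blast
  qed
qed

theorem proposition5p4:
  fixes m n :: nat and F :: "(nat \<times> nat) set"
  assumes "n = 2 * m"
    and "F \<in> facets (Delta' n)"
  shows "cplx {F} \<inter> cplx {G \<in> facets (Delta' n). facet_less n G F}
           = cplx {F - {x} | x. x \<in> Fminus n F}
     \<and> cplx {F} \<inter> cplx {G \<in> facets (Delta' n). facet_less n F G}
           = cplx {F - {x} | x. x \<in> Fplus n F}"
proof (cases "m = 0")
  case True
  then have n0: "n = 0" using assms(1) by simp
  have V0: "V n = {}" unfolding V_def n0 by auto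
  have F0: "F = {}" using facetsD(1)[OF assms(2)] V0 unfolding Delta'_def by auto
  have AA0: "A = {}" if "A \<in> AA n" for A using that n0 unfolding AA_def by auto
  have noP: "\<not> is_path A ps" if "A \<in> AA n" for A ps
  proof
    assume ip: "is_path A ps"
    have "T A = {}" using AA0[OF that] unfolding T_def by auto
    then show False using is_pathD(1,4)[OF ip] by auto
  qed
  have noL: "\<not> facet_less n G H" for G H
  proof
    assume "facet_less n G H"
    then obtain A B where AB: "A \<in> AA n" "B \<in> AA n"
      and alt: "lex_less A B \<or> (A = B \<and> (\<exists>ps qs. is_path A ps \<and> is_path A qs \<and> set ps = G \<and> set qs = H \<and> path_less ps qs))"
      unfolding facet_less_def by blast
    have "\<not> lex_less A B" using AA0[OF AB(1)] AA0[OF AB(2)] unfolding lex_less_def by simp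
    then show False using alt noP AB by blast
  qed
  have Fm: "Fminus n F = {}" using noP unfolding Fminus_def by blast
  have Fp: "Fplus n F = {}" unfolding Fplus_def Fm F0 by simp
  have e1: "{G \<in> facets (Delta' n). facet_less n G F} = {}" "{G \<in> facets (Delta' n). facet_less n F G} = {}"
    using noL by auto
  show ?thesis unfolding Fm Fp e1 by (simp add: cplx_def)
next
  case False
  then have m1: "1 \<le> m" by simp
  obtain A ps where A: "A \<in> AA n" and p: "is_path A ps" and F: "set ps = F"
    using facet_path[OF assms(1) m1 assms(2)] by blast
  have fin: "finite A" using AA_finite[OF A] .
  have md: "n div 2 = m" using assms(1) by simp
  have Fm: "Fminus n F = minus_list m ps"
  proof
    show "Fminus n F \<subseteq> minus_list m ps"
    proof
      fix x assume "x \<in> Fminus n F"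
      then obtain A' ps' where a: "A' \<in> AA n" "is_path A' ps'" "set ps' = F" "x \<in> minus_list (n div 2) ps'"
        unfolding Fminus_def by blast
      have "A' = A \<and> ps' = ps" using path_unique[OF AA_finite[OF a(1)] fin a(2) p] a(3) F by simp
      then show "x \<in> minus_list m ps" using a(4) md by simp
    qed
    show "minus_list m ps \<subseteq> Fminus n F" unfolding Fminus_def using A p F md by auto
  qed
  have Fp: "Fplus n F = set ps - minus_list m ps" unfolding Fplus_def Fm F by simp
  have Aeq: "A' = A" if a: "A' \<in> AA n" "F \<in> facets (DeltaA n A')" for A'
  proof -
    have FT: "F \<subseteq> T A'" using facetsD(1)[OF a(2)] unfolding DeltaA_def by auto
    have "A \<subseteq> A'"
    proof
      fix c assume "c \<in> A"
      then have "c \<in> fst ` set ps \<union> snd ` set ps" using path_indices[OF fin p] by simp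
      then obtain q where "q \<in> F" "c = fst q \<or> c = snd q" using F by auto
      then show "c \<in> A'" using FT unfolding T_def by auto
    qed
    moreover have "card A = card A'" using AA_card a(1) A by simp
    ultimately show ?thesis using card_subset_eq[OF AA_finite[OF a(1)]] by metis
  qed
  have FL1: "\<exists>x\<in>minus_list m ps. x \<notin> G" if fl: "facet_less n G F" for G
  proof -
    from fl obtain B A' where BA: "B \<in> AA n" "A' \<in> AA n" "G \<in> facets (DeltaA n B)" "F \<in> facets (DeltaA n A')"
      and alt: "lex_less B A' \<or> (B = A' \<and> (\<exists>qs ps'. is_path B qs \<and> is_path B ps' \<and> set qs = G \<and> set ps' = F \<and> path_less qs ps'))"
      unfolding facet_less_def by blast
    have A'A: "A' = A" using Aeq BA(2,4) by blast
    have GT: "G \<subseteq> T B" using facetsD(1)[OF BA(3)] unfolding DeltaA_def by auto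
    from alt show ?thesis
    proof
      assume "lex_less B A'"
      then obtain c where c: "c \<in> A" "c \<notin> B" "m < c" using lex_lower[OF assms(1) A BA(1)] A'A by blast
      obtain x where x: "x \<in> minus_list m ps" "fst x = c \<or> snd x = c" using L1[OF fin p c(1) c(3)] by blast
      have "x \<notin> G" using GT c(2) x(2) unfolding T_def by auto
      then show ?thesis using x(1) by blast
    next
      assume "B = A' \<and> (\<exists>qs ps'. is_path B qs \<and> is_path B ps' \<and> set qs = G \<and> set ps' = F \<and> path_less qs ps')"
      then obtain qs ps' where q: "is_path A qs" "is_path A ps'" "set qs = G" "set ps' = F" "path_less qs ps'"
        using A'A by blast
      have "ps' = ps" using path_unique[OF fin fin q(2) p] q(4) F by simp
      then show ?thesis using PC1[OF p q(1), of m] q(3,5) by blast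
    qed
  qed
  have FL2: "\<exists>x\<in>set ps - minus_list m ps. x \<notin> G" if fl: "facet_less n F G" for G
  proof -
    from fl obtain A' B where BA: "A' \<in> AA n" "B \<in> AA n" "F \<in> facets (DeltaA n A')" "G \<in> facets (DeltaA n B)"
      and alt: "lex_less A' B \<or> (A' = B \<and> (\<exists>ps' qs. is_path A' ps' \<and> is_path A' qs \<and> set ps' = F \<and> set qs = G \<and> path_less ps' qs))"
      unfolding facet_less_def by blast
    have A'A: "A' = A" using Aeq BA(1,3) by blast
    have GT: "G \<subseteq> T B" using facetsD(1)[OF BA(4)] unfolding DeltaA_def by auto
    from alt show ?thesis
    proof
      assume "lex_less A' B"
      then obtain c where c: "c \<in> A" "c \<notin> B" "c \<le> m" using lex_upper[OF assms(1) A BA(2)] A'A by blast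
      obtain x where x: "x \<in> set ps - minus_list m ps" "fst x = c \<or> snd x = c" using L2[OF fin p c(1) c(3)] by blast
      have "x \<notin> G" using GT c(2) x(2) unfolding T_def by auto
      then show ?thesis using x(1) by blast
    next
      assume "A' = B \<and> (\<exists>ps' qs. is_path A' ps' \<and> is_path A' qs \<and> set ps' = F \<and> set qs = G \<and> path_less ps' qs)"
      then obtain qs ps' where q: "is_path A qs" "is_path A ps'" "set qs = G" "set ps' = F" "path_less ps' qs"
        using A'A by blast
      have "ps' = ps" using path_unique[OF fin fin q(2) p] q(4) F by simp
      then show ?thesis using PC2[OF p q(1), of m] q(3,5) by blast
    qed
  qed
  have FA: "F \<in> facets (DeltaA n A)" using path_facetA[OF assms(1) A p] F by simp
  have GM: "\<exists>G. G \<in> facets (Delta' n) \<and> facet_less n G F \<and> F - {x} \<subseteq> G" if x: "x \<in> minus_list m ps" for x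
  proof -
    obtain B qs where Bq: "B \<in> AA n" "is_path B qs" "set ps - {x} \<subseteq> set qs" "lex_less B A \<or> (B = A \<and> path_less qs ps)"
      using M2[OF assms(1) A p x] by blast
    have GF: "set qs \<in> facets (Delta' n)" using path_facet[OF assms(1) Bq(1,2)] .
    have GA: "set qs \<in> facets (DeltaA n B)" using path_facetA[OF assms(1) Bq(1,2)] .
    have "facet_less n (set qs) F"
      unfolding facet_less_def
    proof (intro exI conjI)
      show "B \<in> AA n" "A \<in> AA n" "set qs \<in> facets (DeltaA n B)" "F \<in> facets (DeltaA n A)" using Bq(1) A GA FA by auto
      show "lex_less B A \<or> (B = A \<and> (\<exists>ps' qs'. is_path B ps' \<and> is_path B qs' \<and> set ps' = set qs \<and> set qs' = F \<and> path_less ps' qs'))"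
        using Bq(2,4) p F by blast
    qed
    then show ?thesis using GF Bq(3) F by blast
  qed
  have GP: "\<exists>G. G \<in> facets (Delta' n) \<and> facet_less n F G \<and> F - {x} \<subseteq> G" if x: "x \<in> set ps - minus_list m ps" for x
  proof -
    obtain B qs where Bq: "B \<in> AA n" "is_path B qs" "set ps - {x} \<subseteq> set qs" "lex_less A B \<or> (B = A \<and> path_less ps qs)"
      using P2[OF assms(1) A p x] by blast
    have GF: "set qs \<in> facets (Delta' n)" using path_facet[OF assms(1) Bq(1,2)] .
    have GA: "set qs \<in> facets (DeltaA n B)" using path_facetA[OF assms(1) Bq(1,2)] .
    have "facet_less n F (set qs)"
      unfolding facet_less_def
    proof (intro exI conjI)
      show "A \<in> AA n" "B \<in> AA n" "F \<in> facets (DeltaA n A)" "set qs \<in> facets (DeltaA n B)" using Bq(1) A GA FA by auto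
      show "lex_less A B \<or> (A = B \<and> (\<exists>ps' qs'. is_path A ps' \<and> is_path A qs' \<and> set ps' = F \<and> set qs' = set qs \<and> path_less ps' qs'))"
        using Bq(2,4) p F by blast
    qed
    then show ?thesis using GF Bq(3) F by blast
  qed
  show ?thesis
  proof (rule conjI)
    show "cplx {F} \<inter> cplx {G \<in> facets (Delta' n). facet_less n G F} = cplx {F - {x} |x. x \<in> Fminus n F}"
    proof (rule set_eqI, rule iffI)
      fix H assume "H \<in> cplx {F} \<inter> cplx {G \<in> facets (Delta' n). facet_less n G F}"
      then obtain G where G: "G \<in> facets (Delta' n)" "facet_less n G F" "H \<subseteq> G" "H \<subseteq> F"
        unfolding cplx_def by blast
      obtain x where x: "x \<in> minus_list m ps" "x \<notin> G" using FL1[OF G(2)] by blast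
      have "H \<subseteq> F - {x}" using G(3,4) x(2) by blast
      then show "H \<in> cplx {F - {x} |x. x \<in> Fminus n F}" unfolding cplx_def Fm using x(1) by blast
    next
      fix H assume "H \<in> cplx {F - {x} |x. x \<in> Fminus n F}"
      then obtain x where x: "x \<in> minus_list m ps" "H \<subseteq> F - {x}" unfolding cplx_def Fm by blast
      obtain G where G: "G \<in> facets (Delta' n)" "facet_less n G F" "F - {x} \<subseteq> G" using GM[OF x(1)] by blast
      show "H \<in> cplx {F} \<inter> cplx {G \<in> facets (Delta' n). facet_less n G F}"
        unfolding cplx_def using G x(2) by blast
    qed
    show "cplx {F} \<inter> cplx {G \<in> facets (Delta' n). facet_less n F G} = cplx {F - {x} |x. x \<in> Fplus n F}"
    proof (rule set_eqI, rule iffI)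
      fix H assume "H \<in> cplx {F} \<inter> cplx {G \<in> facets (Delta' n). facet_less n F G}"
      then obtain G where G: "G \<in> facets (Delta' n)" "facet_less n F G" "H \<subseteq> G" "H \<subseteq> F"
        unfolding cplx_def by blast
      obtain x where x: "x \<in> set ps - minus_list m ps" "x \<notin> G" using FL2[OF G(2)] by blast
      have "H \<subseteq> F - {x}" using G(3,4) x(2) by blast
      then show "H \<in> cplx {F - {x} |x. x \<in> Fplus n F}" unfolding cplx_def Fp using x(1) by blast
    next
      fix H assume "H \<in> cplx {F - {x} |x. x \<in> Fplus n F}"
      then obtain x where x: "x \<in> set ps - minus_list m ps" "H \<subseteq> F - {x}" unfolding cplx_def Fp by blast
      obtain G where G: "G \<in> facets (Delta' n)" "facet_less n F G" "F - {x} \<subseteq> G" using GP[OF x(1)] by blast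
      show "H \<in> cplx {F} \<inter> cplx {G \<in> facets (Delta' n). facet_less n F G}"
        unfolding cplx_def using G x(2) by blast
    qed
  qed
qed


end
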